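(* Let $V$ be a separable Banach space, $\alpha,\beta\in(0,1)$ with $\alpha(1+\beta)>1$, and $A\in C^\alpha_tC^{1+\beta}_V$. Then for any $x_0\in V$ there exists a unique global solution on $[0,T]$ to the YDE associated to $(x_0,A)$, i.e. $x_t=x_0+\int_0^tA(\mathrm{d} s,x_s)$ for all $t\in[0,T]$.
   Context: Fix $T>0$. For a path $f:[0,T]\to E$ write $f_{s,t}=f_t-f_s$, $\llbracket f\rrbracket_\gamma=\sup_{s<t}\|f_{s,t}\|_E/|t-s|^\gamma$, $\|f\|_\gamma=\sup_t\|f_t\|_E+\llbracket f\rrbracket_\gamma$, $C^\gamma_tE$ the paths with $\|f\|_\gamma<\infty$. For $g:V\to W$, $\|g\|_\beta=\sup_{x\ne y}\|g(x)-g(y)\|_W/\|x-y\|_V^\beta+\sup_x\|g(x)\|_W$. Fields $A:[0,T]\times V\to W$ satisfy $A(0,\cdot)=0$, $A_{s,t}(x):=A(t,x)-A(s,x)$; $A\in C^\alpha_tC^\beta_{V,W}$ iff $\|A\|_{\alpha,\beta}=\sup_{s<t}\|A_{s,t}\|_\beta/|t-s|^\alpha<\infty$; $C^\alpha_tC^\beta_V:=C^\alpha_tC^\beta_{V,V}$. $A\in C^\alpha_tC^{1+\beta}_{V}$ means $A\in C^\alpha_tC^\beta_V$, $A(t,\cdot)$ is Fréchet differentiable for all $t$, and $DA\in C^\alpha_tC^\beta_{V,\mathcal L(V;V)}$; $\|A\|_{\alpha,1+\beta}=\|A\|_{\alpha,\beta}+\|DA\|_{\alpha,\beta}$. For $x\in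 C^\gamma_tV$ with $\alpha+\beta\gamma>1$, $\int_s^tA(\mathrm{d} r,x_r):=\lim_{|\Pi|\to0}\sum_iA_{t_i,t_{i+1}}(x_{t_i})$ (limit over partitions of $[s,t]$, exists and is partition-independent). A solution to the YDE associated to $(x_0,A)$ on $[0,T]$ is $x\in C^\gamma([0,T];V)$, for some $\gamma$ with $\alpha+\beta\gamma>1$, with $x_t=x_0+\int_0^tA(\mathrm{d} s,x_s)$ for all $t$. *)

theory Defs
  imports "HOL-Analysis.Analysis"
begin

definition separable_space :: "'a::metric_space itself \<Rightarrow> bool" where
  "separable_space _ \<longleftrightarrow> (\<exists>D::'a set. countable D \<and> closure D = UNIV)"

definition holder_path :: "real \<Rightarrow> real \<Rightarrow> (real \<Rightarrow> 'v::real_normed_vector) \<Rightarrow> bool" where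
  "holder_path T \<gamma> f \<longleftrightarrow> (\<exists>K. (\<forall>t\<in>{0..T}. norm (f t) \<le> K) \<and>
      (\<forall>s\<in>{0..T}. \<forall>t\<in>{0..T}. s < t \<longrightarrow> norm (f t - f s) \<le> K * (t - s) powr \<gamma>))"

definition field_holder :: "real \<Rightarrow> real \<Rightarrow> real \<Rightarrow> (real \<Rightarrow> 'v::real_normed_vector \<Rightarrow> 'w::real_normed_vector) \<Rightarrow> bool" where
  "field_holder T \<alpha> \<beta> A \<longleftrightarrow> (\<exists>K. \<forall>s\<in>{0..T}. \<forall>t\<in>{0..T}. s < t \<longrightarrow>
      (\<forall>x y. x \<noteq> y \<longrightarrow> norm ((A t x - A s x) - (A t y - A s y)) \<le> K * (t - s) powr \<alpha> * norm (x - y) powr \<beta>) \<and>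
      (\<forall>x. norm (A t x - A s x) \<le> K * (t - s) powr \<alpha>))"

text \<open>A in C^alpha_t C^{1+beta}_V on [0,T] (including the standing assumption A(0,.) = 0).\<close>
definition field_holder_1 :: "real \<Rightarrow> real \<Rightarrow> real \<Rightarrow> (real \<Rightarrow> 'v::real_normed_vector \<Rightarrow> 'v) \<Rightarrow> bool" where
  "field_holder_1 T \<alpha> \<beta> A \<longleftrightarrow> (\<forall>x. A 0 x = 0) \<and> field_holder T \<alpha> \<beta> A \<and>
     (\<exists>DA :: real \<Rightarrow> 'v \<Rightarrow> ('v \<Rightarrow>\<^sub>L 'v).
        (\<forall>t\<in>{0..T}. \<forall>x. (A t has_derivative blinfun_apply (DA t x)) (at x)) \<and>
        field_holder T \<alpha> \<beta> DA)"

definition has_young_integral ::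
  "(real \<Rightarrow> 'v \<Rightarrow> 'w::real_normed_vector) \<Rightarrow> (real \<Rightarrow> 'v) \<Rightarrow> real \<Rightarrow> real \<Rightarrow> 'w \<Rightarrow> bool" where
  "has_young_integral A x s t I \<longleftrightarrow> (\<forall>\<epsilon>>0. \<exists>\<delta>>0. \<forall>(n::nat) (p::nat \<Rightarrow> real).
      p 0 = s \<and> p n = t \<and> (\<forall>i<n. p i < p (Suc i) \<and> p (Suc i) - p i < \<delta>) \<longrightarrow>
      norm ((\<Sum>i<n. A (p (Suc i)) (x (p i)) - A (p i) (x (p i))) - I) < \<epsilon>)"

definition YDE_solution ::
  "real \<Rightarrow> real \<Rightarrow> real \<Rightarrow> (real \<Rightarrow> 'v::real_normed_vector \<Rightarrow> 'v) \<Rightarrow> 'v \<Rightarrow> (real \<Rightarrow> 'v) \<Rightarrow> bool" where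
  "YDE_solution T \<alpha> \<beta> A x0 x \<longleftrightarrow>
     (\<exists>\<gamma>. \<alpha> + \<beta> * \<gamma> > 1 \<and> holder_path T \<gamma> x) \<and>
     (\<forall>t\<in>{0..T}. has_young_integral A x 0 t (x t - x0))"

end

theory Submission
  imports Defs
begin


definition nxt :: "real set \<Rightarrow> real \<Rightarrow> real" where
  "nxt F u = Min {v\<in>F. u < v}"

definition psum :: "(real \<Rightarrow> real \<Rightarrow> 'a::real_normed_vector) \<Rightarrow> real set \<Rightarrow> 'a" where
  "psum X F = (\<Sum>u\<in>{u\<in>F. u < Max F}. X u (nxt F u))"

definition ppart :: "real \<Rightarrow> real \<Rightarrow> real set \<Rightarrow> bool" where
  "ppart s t F \<longleftrightarrow> finite F \<and> F \<subseteq> {s..t} \<and> s \<in> F \<and> t \<in> F"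

definition pfine :: "real \<Rightarrow> real set \<Rightarrow> bool" where
  "pfine d F \<longleftrightarrow> (\<forall>u\<in>F. u < Max F \<longrightarrow> nxt F u - u \<le> d)"

lemma part_Max: "ppart s t F \<Longrightarrow> Max F = t"
  unfolding ppart_def by (meson Max_eqI atLeastAtMost_iff subsetD)

lemma part_Min: "ppart s t F \<Longrightarrow> Min F = s"
  unfolding ppart_def by (meson Min_eqI atLeastAtMost_iff subsetD)

lemma part_le: "ppart s t F \<Longrightarrow> s \<le> t"
  unfolding ppart_def by auto

lemma nxt_props:
  assumes "finite F" "v \<in> F" "u < v"
  shows "nxt F u \<in> F" "u < nxt F u" "nxt F u \<le> v" "\<And>w. w \<in> F \<Longrightarrow> u < w \<Longrightarrow> nxt F u \<le> w"
proof -
  have ne: "{v\<in>F. u < v} \<noteq> {}" "finite {v\<in>F. u < v}" using assms by auto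
  have "nxt F u \<in> {v\<in>F. u < v}" unfolding nxt_def using Min_in[OF ne(2,1)] .
  then show "nxt F u \<in> F" "u < nxt F u" by auto
  show "nxt F u \<le> v" unfolding nxt_def using assms by (intro Min_le) auto
  show "\<And>w. w \<in> F \<Longrightarrow> u < w \<Longrightarrow> nxt F u \<le> w" unfolding nxt_def using assms by (intro Min_le) auto
qed

lemma nxt_eqI:
  assumes "finite F" "v \<in> F" "u < v" "\<And>w. w \<in> F \<Longrightarrow> u < w \<Longrightarrow> v \<le> w"
  shows "nxt F u = v"
  unfolding nxt_def using assms by (intro Min_eqI) auto

lemma nxt_lower:
  assumes "ppart s t F" "u \<in> F" "w \<in> F" "w < u"
  shows "nxt (F \<inter> {..u}) w = nxt F w"
proof -
  have f: "finite F" using assms unfolding ppart_def by auto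
  show ?thesis
    using nxt_props[OF f assms(2) assms(4)] assms f
    by (intro nxt_eqI) (auto intro: nxt_props)
qed

lemma nxt_upper:
  assumes "u \<le> w"
  shows "nxt (F \<inter> {u..}) w = nxt F w"
proof -
  have "{v \<in> F \<inter> {u..}. w < v} = {v\<in>F. w < v}" using assms by auto
  then show ?thesis unfolding nxt_def by simp
qed

lemma part_lower: "ppart s t F \<Longrightarrow> u \<in> F \<Longrightarrow> ppart s u (F \<inter> {..u})"
  unfolding ppart_def by auto

lemma part_upper: "ppart s t F \<Longrightarrow> u \<in> F \<Longrightarrow> ppart u t (F \<inter> {u..})"
  unfolding ppart_def by auto

lemma psum_split:
  assumes P: "ppart s t F" and u: "u \<in> F"
  shows "psum X F = psum X (F \<inter> {..u}) + psum X (F \<inter> {u..})"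
proof -
  have f: "finite F" using P unfolding ppart_def by auto
  have M1: "Max (F \<inter> {..u}) = u" using part_Max[OF part_lower[OF P u]] .
  have M2: "Max (F \<inter> {u..}) = t" using part_Max[OF part_upper[OF P u]] .
  have M: "Max F = t" using part_Max[OF P] .
  have ut: "u \<le> t" using P u unfolding ppart_def by auto
  have eq: "{w\<in>F. w < t} = {w\<in>F \<inter> {..u}. w < u} \<union> {w\<in>F \<inter> {u..}. w < t}" using ut by auto
  have "psum X F = (\<Sum>w\<in>{w\<in>F \<inter> {..u}. w < u} \<union> {w\<in>F \<inter> {u..}. w < t}. X w (nxt F w))"
    unfolding psum_def M eq ..
  also have "\<dots> = (\<Sum>w\<in>{w\<in>F \<inter> {..u}. w < u}. X w (nxt F w)) + (\<Sum>w\<in>{w\<in>F \<inter> {u..}. w < t}. X w (nxt F w))"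
    using f by (intro sum.union_disjoint) auto
  also have "(\<Sum>w\<in>{w\<in>F \<inter> {..u}. w < u}. X w (nxt F w)) = psum X (F \<inter> {..u})"
    unfolding psum_def M1 using nxt_lower[OF P u] by (intro sum.cong) auto
  also have "(\<Sum>w\<in>{w\<in>F \<inter> {u..}. w < t}. X w (nxt F w)) = psum X (F \<inter> {u..})"
    unfolding psum_def M2 using nxt_upper[of u] by (intro sum.cong) auto
  finally show ?thesis .
qed

lemma psum_single: "psum X {a} = 0"
proof -
  have "{u\<in>{a}. u < Max {a}} = {}" by auto
  then show ?thesis unfolding psum_def by (simp only:) simp
qed

lemma psum_pair: "a < b \<Longrightarrow> psum X {a, b} = X a b"
proof -
  assume ab: "a < b"
  have M: "Max {a,b} = b" using ab by auto
  have "{u\<in>{a,b}. u < b} = {a}" using ab by auto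
  moreover have "nxt {a,b} a = b" using ab by (intro nxt_eqI) auto
  ultimately show ?thesis unfolding psum_def M by simp
qed

lemma psum_cong:
  assumes "finite F" "\<And>a b. a \<in> F \<Longrightarrow> b \<in> F \<Longrightarrow> a < b \<Longrightarrow> X a b = Y a b"
  shows "psum X F = psum Y F"
  unfolding psum_def using assms nxt_props[OF assms(1) Max_in[OF assms(1)]]
  by (intro sum.cong) auto

lemma psum_diff: "psum (\<lambda>a b. X a b - Y a b) F = psum X F - psum Y F"
  unfolding psum_def by (simp add: sum_subtractf)

lemma psum_add: "psum (\<lambda>a b. X a b + Y a b) F = psum X F + psum Y F"
  unfolding psum_def by (simp add: sum.distrib)

lemma psum_cmult: "psum (\<lambda>a b. c * (X a b :: real)) F = c * psum X F"
  unfolding psum_def by (simp add: sum_distrib_left)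

lemma psum_norm: "norm (psum X F) \<le> psum (\<lambda>a b. norm (X a b)) F"
  unfolding psum_def by (rule norm_sum)

lemma psum_mono:
  assumes "finite F" "\<And>a b. a \<in> F \<Longrightarrow> b \<in> F \<Longrightarrow> a < b \<Longrightarrow> X a b \<le> (Y a b :: real)"
  shows "psum X F \<le> psum Y F"
  unfolding psum_def using assms nxt_props[OF assms(1) Max_in[OF assms(1)]]
  by (intro sum_mono) auto


definition sM :: "real \<Rightarrow> real" where "sM th = 2 / (1 - 2 powr (1 - th))"

lemma sM_props:
  assumes "th > 1"
  shows "sM th > 0" "sM th * 2 powr (1 - th) + 2 = sM th"
proof -
  have lt: "2 powr (1 - th) < 1"
  proof -
    have "2 powr (1 - th) < 2 powr (0::real)" using assms by (intro powr_less_mono) auto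
    also have "\<dots> = 1" by simp
    finally show ?thesis .
  qed
  then show "sM th > 0" unfolding sM_def by (intro divide_pos_pos) auto
  have ne: "1 - 2 powr (1 - th) \<noteq> 0" using lt by linarith
  show "sM th * 2 powr (1 - th) + 2 = sM th" unfolding sM_def using ne
    by (simp add: field_simps)
qed

lemma norm4:
  fixes a b c d :: "'a::real_normed_vector"
  shows "norm (a + b - c - d) \<le> norm a + norm b + norm c + norm d"
proof -
  have "norm (a+b-c-d) \<le> norm (a+b-c) + norm d" by (rule norm_triangle_ineq4)
  moreover have "norm (a+b-c) \<le> norm (a+b) + norm c" by (rule norm_triangle_ineq4)
  moreover have "norm(a+b) \<le> norm a + norm b" by (rule norm_triangle_ineq)
  ultimately show ?thesis by linarith
qed

lemma X_diag_zero:
  fixes X :: "real \<Rightarrow> real \<Rightarrow> 'a::real_normed_vector"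
  assumes "th > 1" "norm (X a a - X a a - X a a) \<le> C * (a - a) powr th"
  shows "X a a = 0"
  using assms by simp

lemma sewing_bound:
  fixes X :: "real \<Rightarrow> real \<Rightarrow> 'a::real_normed_vector"
  assumes th: "th > 1" and C: "C \<ge> 0"
   and H: "\<And>p q r. a0 \<le> p \<Longrightarrow> p \<le> q \<Longrightarrow> q \<le> r \<Longrightarrow> r \<le> b0 \<Longrightarrow>
            norm (X p r - X p q - X q r) \<le> C * (r - p) powr th"
   and P: "ppart a b F" "a0 \<le> a" "b \<le> b0"
  shows "norm (psum X F - X a b) \<le> sM th * C * (b - a) powr th"
  using P
proof (induction "card F" arbitrary: F a b rule: less_induct)
  case less
  have f: "finite F" and Fs: "F \<subseteq> {a..b}" and aF: "a \<in> F" and bF: "b \<in> F"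
    using less.prems unfolding ppart_def by auto
  have ab: "a \<le> b" using part_le[OF less.prems(1)] .
  have sM0: "sM th > 0" using sM_props[OF th] by auto
  show ?case
  proof (cases "a = b")
    case True
    then have F: "F = {a}" using Fs aF by auto
    have "X a a = 0" using H[of a a a] less.prems True th by simp
    then show ?thesis using F True by (simp add: psum_single)
  next
    case False
    with ab have ab: "a < b" by simp
    define m where "m = (a + b) / 2"
    define u where "u = Max (F \<inter> {..m})"
    define v where "v = Min (F \<inter> {m<..})"
    have fu: "finite (F \<inter> {..m})" "F \<inter> {..m} \<noteq> {}" using f aF ab by (auto simp: m_def)
    have fv: "finite (F \<inter> {m<..})" "F \<inter> {m<..} \<noteq> {}" using f bF ab by (auto simp: m_def)
    have uF: "u \<in> F" "u \<le> m" using Max_in[OF fu] unfolding u_def by auto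
    have ule: "\<And>w. w \<in> F \<Longrightarrow> w \<le> m \<Longrightarrow> w \<le> u" unfolding u_def using fu by auto
    have vF: "v \<in> F" "m < v" using Min_in[OF fv] unfolding v_def by auto
    have vge: "\<And>w. w \<in> F \<Longrightarrow> m < w \<Longrightarrow> v \<le> w" unfolding v_def using fv by auto
    have au: "a \<le> u" using ule[OF aF] ab by (simp add: m_def)
    have vb: "v \<le> b" using vge[OF bF] ab by (simp add: m_def)
    have uv: "u < v" using uF vF by simp
    define F1 where "F1 = F \<inter> {..u}"
    define F2 where "F2 = F \<inter> {v..}"
    define G where "G = F \<inter> {u..}"
    have P1: "ppart a u F1" unfolding F1_def using part_lower[OF less.prems(1) uF(1)] .
    have P2: "ppart v b F2" unfolding F2_def using part_upper[OF less.prems(1) vF(1)] .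
    have PG: "ppart u b G" unfolding G_def using part_upper[OF less.prems(1) uF(1)] .
    have vG: "v \<in> G" unfolding G_def using vF uv by auto
    have G1: "G \<inter> {..v} = {u, v}"
    proof
      show "G \<inter> {..v} \<subseteq> {u, v}"
      proof
        fix w assume w: "w \<in> G \<inter> {..v}"
        then have wF: "w \<in> F" "u \<le> w" "w \<le> v" unfolding G_def by auto
        show "w \<in> {u, v}"
        proof (cases "w \<le> m")
          case True then show ?thesis using ule[OF wF(1)] wF by auto
        next
          case False then show ?thesis using vge[OF wF(1)] wF by auto
        qed
      qed
      show "{u, v} \<subseteq> G \<inter> {..v}" using uF vF uv unfolding G_def by auto
    qed
    have G2: "G \<inter> {v..} = F2" unfolding G_def F2_def using uv by auto
    have psG: "psum X G = X u v + psum X F2"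
      using psum_split[OF PG vG, of X] G1 G2 psum_pair[OF uv] by simp
    have psF: "psum X F = psum X F1 + X u v + psum X F2"
      using psum_split[OF less.prems(1) uF(1), of X] psG unfolding F1_def G_def by simp
    have c1: "card F1 < card F"
    proof (rule psubset_card_mono[OF f])
      have "b \<notin> F1" using uF ab by (auto simp: F1_def m_def)
      then show "F1 \<subset> F" unfolding F1_def using bF by auto
    qed
    have c2: "card F2 < card F"
    proof (rule psubset_card_mono[OF f])
      have "a \<notin> F2" using vF ab by (auto simp: F2_def m_def)
      then show "F2 \<subset> F" unfolding F2_def using aF by auto
    qed
    have IH1: "norm (psum X F1 - X a u) \<le> sM th * C * (u - a) powr th"
      using less.hyps[OF c1 P1] less.prems uv vb by simp
    have IH2: "norm (psum X F2 - X v b) \<le> sM th * C * (b - v) powr th"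
      using less.hyps[OF c2 P2] less.prems au uv by simp
    have d1: "norm (X a b - X a u - X u b) \<le> C * (b - a) powr th"
      using H[of a u b] less.prems au uv vb by simp
    have d2: "norm (X u b - X u v - X v b) \<le> C * (b - a) powr th"
    proof -
      have "norm (X u b - X u v - X v b) \<le> C * (b - u) powr th"
        using H[of u v b] less.prems au uv vb by simp
      also have "\<dots> \<le> C * (b - a) powr th"
        using au uv vb th C by (intro mult_left_mono powr_mono2) auto
      finally show ?thesis .
    qed
    have h1: "(u - a) powr th \<le> ((b - a) / 2) powr th"
      using au uF th by (intro powr_mono2) (auto simp: m_def)
    have h2: "(b - v) powr th \<le> ((b - a) / 2) powr th"
      using vb vF th by (intro powr_mono2) (auto simp: m_def)
    have eq: "psum X F - X a b = (psum X F1 - X a u) + (psum X F2 - X v b)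
          - (X a b - X a u - X u b) - (X u b - X u v - X v b)"
      using psF by (simp add: algebra_simps)
    have "norm (psum X F - X a b) \<le> norm (psum X F1 - X a u) + norm (psum X F2 - X v b)
          + norm (X a b - X a u - X u b) + norm (X u b - X u v - X v b)"
      unfolding eq by (rule norm4)
    also have "\<dots> \<le> sM th * C * ((b - a) / 2) powr th + sM th * C * ((b - a) / 2) powr th
          + C * (b - a) powr th + C * (b - a) powr th"
    proof -
      have "sM th * C * (u - a) powr th \<le> sM th * C * ((b-a)/2) powr th"
        by (intro mult_left_mono h1) (use sM0 C in auto)
      moreover have "sM th * C * (b - v) powr th \<le> sM th * C * ((b-a)/2) powr th"
        by (intro mult_left_mono h2) (use sM0 C in auto)
      ultimately show ?thesis using IH1 IH2 d1 d2 by linarith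
    qed
    also have "\<dots> = (sM th * 2 powr (1 - th) + 2) * C * (b - a) powr th"
    proof -
      have p1: "((b - a) / 2) powr th = (b - a) powr th / 2 powr th"
        using ab by (simp add: powr_divide)
      have p2: "2 powr (1 - th) = 2 / 2 powr th" by (simp add: powr_diff)
      have e: "2 * ((b - a) / 2) powr th = 2 powr (1 - th) * (b - a) powr th"
        unfolding p1 p2 by simp
      have "sM th * C * ((b - a) / 2) powr th + sM th * C * ((b - a) / 2) powr th
          + C * (b - a) powr th + C * (b - a) powr th
          = sM th * C * (2 * ((b - a) / 2) powr th) + 2 * C * (b - a) powr th" by (simp add: algebra_simps)
      also have "\<dots> = (sM th * 2 powr (1 - th) + 2) * C * (b - a) powr th"
        unfolding e by (simp add: algebra_simps)
      finally show ?thesis .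
    qed
    also have "\<dots> = sM th * C * (b - a) powr th" using sM_props[OF th] by simp
    finally show ?thesis .
  qed
qed


lemma psum_refine:
  assumes "ppart s t F" "ppart s t G" "F \<subseteq> G"
  shows "psum X G = psum (\<lambda>a b. psum X (G \<inter> {a..b})) F"
  using assms
proof (induction "card F" arbitrary: F G s rule: less_induct)
  case less
  have f: "finite F" and Fs: "F \<subseteq> {s..t}" and sF: "s \<in> F" and tF: "t \<in> F"
    using less.prems unfolding ppart_def by auto
  have fG: "finite G" and Gs: "G \<subseteq> {s..t}" using less.prems unfolding ppart_def by auto
  show ?case
  proof (cases "s = t")
    case True
    then have "F = {s}" "G = {s}" using Fs sF Gs less.prems(3) by auto
    then show ?thesis by (simp add: psum_single)
  next
    case False
    then have st: "s < t" using part_le[OF less.prems(1)] by simp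
    define m where "m = nxt F s"
    have m: "m \<in> F" "s < m" "m \<le> t" "\<And>w. w \<in> F \<Longrightarrow> s < w \<Longrightarrow> m \<le> w"
      using nxt_props[OF f tF st] unfolding m_def by auto
    have F1: "F \<inter> {..m} = {s, m}"
    proof
      show "F \<inter> {..m} \<subseteq> {s, m}"
      proof
        fix w assume w: "w \<in> F \<inter> {..m}"
        then have "s \<le> w" using Fs by auto
        then show "w \<in> {s, m}" using m(4)[of w] w by (cases "s = w") auto
      qed
      show "{s, m} \<subseteq> F \<inter> {..m}" using sF m by auto
    qed
    have G1: "G \<inter> {..m} = G \<inter> {s..m}" using Gs by auto
    have mG: "m \<in> G" using m less.prems(3) by auto
    have PF': "ppart m t (F \<inter> {m..})" using part_upper[OF less.prems(1) m(1)] .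
    have PG': "ppart m t (G \<inter> {m..})" using part_upper[OF less.prems(2) mG] .
    have c: "card (F \<inter> {m..}) < card F"
    proof (rule psubset_card_mono[OF f])
      have "s \<notin> F \<inter> {m..}" using m by auto
      then show "F \<inter> {m..} \<subset> F" using sF by auto
    qed
    have IH: "psum X (G \<inter> {m..}) = psum (\<lambda>a b. psum X ((G \<inter> {m..}) \<inter> {a..b})) (F \<inter> {m..})"
      using less.hyps[OF c PF' PG'] less.prems(3) by auto
    also have "\<dots> = psum (\<lambda>a b. psum X (G \<inter> {a..b})) (F \<inter> {m..})"
    proof (rule psum_cong)
      show "finite (F \<inter> {m..})" using f by auto
      fix a b assume "a \<in> F \<inter> {m..}" "b \<in> F \<inter> {m..}" "a < b"
      then have "(G \<inter> {m..}) \<inter> {a..b} = G \<inter> {a..b}" by auto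
      then show "psum X ((G \<inter> {m..}) \<inter> {a..b}) = psum X (G \<inter> {a..b})" by simp
    qed
    finally have IH': "psum X (G \<inter> {m..}) = psum (\<lambda>a b. psum X (G \<inter> {a..b})) (F \<inter> {m..})" .
    have "psum X G = psum X (G \<inter> {s..m}) + psum X (G \<inter> {m..})"
      using psum_split[OF less.prems(2) mG] G1 by simp
    also have "\<dots> = psum (\<lambda>a b. psum X (G \<inter> {a..b})) (F \<inter> {..m})
        + psum (\<lambda>a b. psum X (G \<inter> {a..b})) (F \<inter> {m..})"
      unfolding F1 psum_pair[OF m(2)] IH' ..
    also have "\<dots> = psum (\<lambda>a b. psum X (G \<inter> {a..b})) F"
      by (rule psum_split[OF less.prems(1) m(1), symmetric])
    finally show ?thesis .
  qed
qed

lemma psum_telescope: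
  fixes f :: "real \<Rightarrow> 'a::real_normed_vector"
  assumes "ppart s t F"
  shows "psum (\<lambda>a b. f b - f a) F = f t - f s"
proof -
  have "norm (psum (\<lambda>a b. f b - f a) F - (f t - f s)) \<le> sM 2 * 0 * (t - s) powr 2"
    by (rule sewing_bound[where a0=s and b0=t]) (use assms in auto)
  then show ?thesis by simp
qed

lemma psum_mono_nxt:
  assumes "finite F" "\<And>a. a \<in> F \<Longrightarrow> a < Max F \<Longrightarrow> X a (nxt F a) \<le> (Y a (nxt F a) :: real)"
  shows "psum X F \<le> psum Y F"
  unfolding psum_def using assms by (intro sum_mono) auto

lemma psum_fine_bound:
  assumes P: "ppart s t F" and fi: "pfine d F" and th: "th > 1" and C: "C \<ge> 0"
    and le: "\<And>a b. a \<in> F \<Longrightarrow> b \<in> F \<Longrightarrow> a < b \<Longrightarrow> b - a \<le> d \<Longrightarrow> Y a b \<le> C * (b - a) powr th"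
  shows "psum Y F \<le> C * d powr (th - 1) * (t - s)"
proof -
  have f: "finite F" using P unfolding ppart_def by auto
  have "psum Y F \<le> psum (\<lambda>a b. C * d powr (th - 1) * (b - a)) F"
  proof (rule psum_mono_nxt[OF f])
    fix a assume a: "a \<in> F" "a < Max F"
    define b where "b = nxt F a"
    have ab: "b \<in> F" "a < b" "b - a \<le> d"
      using nxt_props[OF f Max_in[OF f] a(2)] a fi f unfolding b_def pfine_def
      by (auto simp: Max_in)
    have "Y a b \<le> C * (b - a) powr th" using le ab a by auto
    also have "(b - a) powr th = (b - a) powr (th - 1) * (b - a)"
      using ab by (simp add: powr_diff)
    also have "C * ((b - a) powr (th - 1) * (b - a)) \<le> C * (d powr (th - 1) * (b - a))"
      using ab th C by (intro mult_left_mono mult_right_mono powr_mono2) auto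
    finally show "Y a (nxt F a) \<le> C * d powr (th - 1) * (nxt F a - a)"
      unfolding b_def by (simp add: mult.assoc)
  qed
  also have "\<dots> = C * d powr (th - 1) * (t - s)"
    using psum_cmult[of "C * d powr (th - 1)" "\<lambda>a b. b - a" F] psum_telescope[OF P, of "\<lambda>x. x"]
    by simp
  finally show ?thesis .
qed


lemma refine_bound:
  fixes X :: "real \<Rightarrow> real \<Rightarrow> 'a::real_normed_vector"
  assumes th: "th > 1" and C: "C \<ge> 0"
   and H: "\<And>p q r. s \<le> p \<Longrightarrow> p \<le> q \<Longrightarrow> q \<le> r \<Longrightarrow> r \<le> t \<Longrightarrow>
            norm (X p r - X p q - X q r) \<le> C * (r - p) powr th"
   and PF: "ppart s t F" and PG: "ppart s t G" and FG: "F \<subseteq> G" and fi: "pfine d F"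
  shows "norm (psum X G - psum X F) \<le> sM th * C * d powr (th - 1) * (t - s)"
proof -
  have fG: "finite G" and Gs: "G \<subseteq> {s..t}" using PG unfolding ppart_def by auto
  have Fs: "F \<subseteq> {s..t}" using PF unfolding ppart_def by auto
  have "psum X G - psum X F = psum (\<lambda>a b. psum X (G \<inter> {a..b}) - X a b) F"
    unfolding psum_diff psum_refine[OF PF PG FG, of X] ..
  then have "norm (psum X G - psum X F) \<le> psum (\<lambda>a b. norm (psum X (G \<inter> {a..b}) - X a b)) F"
    using psum_norm by metis
  also have "\<dots> \<le> (sM th * C) * d powr (th - 1) * (t - s)"
  proof (rule psum_fine_bound[OF PF fi th])
    show "0 \<le> sM th * C" using sM_props[OF th] C by simp
    fix a b assume ab: "a \<in> F" "b \<in> F" "a < b" "b - a \<le> d"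
    have P: "ppart a b (G \<inter> {a..b})" using ab FG fG unfolding ppart_def by auto
    show "norm (psum X (G \<inter> {a..b}) - X a b) \<le> sM th * C * (b - a) powr th"
      by (rule sewing_bound[OF th C H P]) (use ab Fs in auto)
  qed
  finally show ?thesis .
qed

lemma enum_strict:
  assumes "\<forall>i<n. p i < (p (Suc i) :: real)" "i < j" "j \<le> n"
  shows "p i < p j"
  using assms(2,3)
proof (induction j)
  case 0 then show ?case by simp
next
  case (Suc j)
  have jn: "j < n" using Suc.prems by simp
  have step: "p j < p (Suc j)" using assms(1) jn by simp
  show ?case
  proof (cases "i = j")
    case True then show ?thesis using step by simp
  next
    case False
    then have "i < j" using Suc.prems by simp
    then have "p i < p j" using Suc.IH jn by simp
    then show ?thesis using step by simp
  qed
qed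

lemma enum_mono:
  assumes "\<forall>i<n. p i < (p (Suc i) :: real)" "i \<le> j" "j \<le> n"
  shows "p i \<le> p j"
proof (cases "i = j")
  case False
  then have "i < j" using assms(2) by simp
  then show ?thesis using enum_strict[OF assms(1) _ assms(3)] by (simp add: less_imp_le)
qed simp

lemma enum_props:
  assumes E: "\<forall>i<n. p i < (p (Suc i) :: real)"
  shows "Max (p ` {..n}) = p n"
    "\<And>i. i < n \<Longrightarrow> nxt (p ` {..n}) (p i) = p (Suc i)"
    "psum X (p ` {..n}) = (\<Sum>i<n. X (p i) (p (Suc i)))"
    "ppart (p 0) (p n) (p ` {..n})"
    "pfine d (p ` {..n}) \<longleftrightarrow> (\<forall>i<n. p (Suc i) - p i \<le> d)"
proof -
  note mono = enum_mono[OF E] and strict = enum_strict[OF E]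
  show M: "Max (p ` {..n}) = p n" using mono by (intro Max_eqI) auto
  show N: "nxt (p ` {..n}) (p i) = p (Suc i)" if i: "i < n" for i
  proof (rule nxt_eqI)
    show "p (Suc i) \<le> w" if w: "w \<in> p ` {..n}" "p i < w" for w
    proof -
      obtain j where j: "j \<le> n" "w = p j" using w(1) by auto
      have "i < j" using j w mono[of j i] i by (cases "j \<le> i") auto
      then show ?thesis using mono[of "Suc i" j] j by auto
    qed
  qed (use i E in auto)
  have inj: "inj_on p {..n}"
  proof (rule inj_onI)
    fix i j assume "i \<in> {..n}" "j \<in> {..n}" "p i = p j"
    then show "i = j" using strict[of i j] strict[of j i] by (cases i j rule: linorder_cases) auto
  qed
  have S: "{u\<in>p ` {..n}. u < Max (p ` {..n})} = p ` {..<n}"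
  proof
    show "{u\<in>p ` {..n}. u < Max (p ` {..n})} \<subseteq> p ` {..<n}"
    proof
      fix u assume "u \<in> {u\<in>p ` {..n}. u < Max (p ` {..n})}"
      then obtain i where i: "i \<le> n" "u = p i" "p i < p n" unfolding M by auto
      then have "i \<noteq> n" by auto
      then show "u \<in> p ` {..<n}" using i by auto
    qed
    show "p ` {..<n} \<subseteq> {u\<in>p ` {..n}. u < Max (p ` {..n})}"
      unfolding M using strict by auto
  qed
  have "psum X (p ` {..n}) = (\<Sum>u\<in>p ` {..<n}. X u (nxt (p ` {..n}) u))"
    unfolding psum_def S ..
  also have "\<dots> = (\<Sum>i<n. X (p i) (nxt (p ` {..n}) (p i)))"
    using inj by (subst sum.reindex) (auto intro: inj_on_subset)
  also have "\<dots> = (\<Sum>i<n. X (p i) (p (Suc i)))" using N by (intro sum.cong) auto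
  finally show "psum X (p ` {..n}) = (\<Sum>i<n. X (p i) (p (Suc i)))" .
  show "ppart (p 0) (p n) (p ` {..n})" unfolding ppart_def using mono by auto
  show "pfine d (p ` {..n}) \<longleftrightarrow> (\<forall>i<n. p (Suc i) - p i \<le> d)"
  proof
    assume "pfine d (p ` {..n})"
    then have a: "\<And>u. u \<in> p ` {..n} \<Longrightarrow> u < p n \<Longrightarrow> nxt (p ` {..n}) u - u \<le> d"
      unfolding pfine_def M by auto
    show "\<forall>i<n. p (Suc i) - p i \<le> d"
    proof (intro allI impI)
      fix i assume i: "i < n"
      have "nxt (p ` {..n}) (p i) - p i \<le> d" using a[of "p i"] strict[of i n] i by auto
      then show "p (Suc i) - p i \<le> d" using N[OF i] by simp
    qed
  next
    assume a: "\<forall>i<n. p (Suc i) - p i \<le> d"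
    show "pfine d (p ` {..n})" unfolding pfine_def M
    proof (intro ballI impI)
      fix u assume u: "u \<in> p ` {..n}" "u < p n"
      then obtain i where i: "i \<le> n" "u = p i" by auto
      have "i < n" using i u by (cases "i = n") auto
      then show "nxt (p ` {..n}) u - u \<le> d" using N a i by auto
    qed
  qed
qed

lemma part_enum:
  assumes P: "ppart s t F"
  shows "\<exists>n p. (\<forall>i<n. p i < (p (Suc i) :: real)) \<and> F = p ` {..n} \<and> p 0 = s \<and> p n = t"
proof -
  have f: "finite F" and Fs: "F \<subseteq> {s..t}" and sF: "s \<in> F" and tF: "t \<in> F"
    using P unfolding ppart_def by auto
  obtain xs where xs: "sorted_wrt (<) xs" "set xs = F"
    using finite_set_strict_sorted[OF f] by blast
  have len: "length xs > 0" using xs sF by (cases xs) auto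
  define n where "n = length xs - 1"
  define p where "p i = xs ! i" for i
  have E: "\<forall>i<n. p i < p (Suc i)"
    unfolding p_def n_def using sorted_wrt_nth_less[OF xs(1)] by auto
  have nn: "{..n} = {..<length xs}"
  proof -
    have "Suc n = length xs" using len n_def by simp
    then show ?thesis using lessThan_Suc_atMost by metis
  qed
  have img: "F = p ` {..n}"
    unfolding xs(2)[symmetric] nn p_def set_conv_nth by auto
  have "p 0 \<in> F" "p n \<in> F" using img by auto
  then have "s \<le> p 0" "p n \<le> t" using Fs by auto
  moreover have "p 0 \<le> s" "t \<le> p n"
  proof -
    obtain i where "i \<le> n" "s = p i" using sF img by auto
    then show "p 0 \<le> s" using enum_mono[OF E, of 0 i] by auto
    obtain j where "j \<le> n" "t = p j" using tF img by auto
    then show "t \<le> p n" using enum_mono[OF E, of j n] by auto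
  qed
  ultimately show ?thesis using E img by (intro exI[of _ n] exI[of _ p]) auto
qed


definition yconv :: "(real \<Rightarrow> real \<Rightarrow> 'a::real_normed_vector) \<Rightarrow> real \<Rightarrow> real \<Rightarrow> 'a \<Rightarrow> bool" where
  "yconv X s t I \<longleftrightarrow> (\<forall>e>0. \<exists>d>0. \<forall>F. ppart s t F \<and> pfine d F \<longrightarrow> norm (psum X F - I) < e)"

definition upart :: "real \<Rightarrow> real \<Rightarrow> nat \<Rightarrow> real set" where
  "upart s t n = (\<lambda>k. s + real k * (t - s) / real (Suc n)) ` {..Suc n}"

lemma upart:
  assumes "s < t"
  shows "ppart s t (upart s t n)" "pfine ((t - s) / real (Suc n)) (upart s t n)"
proof -
  define p where "p k = s + real k * (t - s) / real (Suc n)" for k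
  have ps: "p (Suc i) = p i + (t - s) / real (Suc n)" for i unfolding p_def by (simp add: distrib_right add_divide_distrib)
  have E: "\<forall>i<Suc n. p i < p (Suc i)" unfolding ps using assms by simp
  have p0: "p 0 = s" and pn: "p (Suc n) = t" unfolding p_def by auto
  have U: "upart s t n = p ` {..Suc n}" unfolding upart_def p_def ..
  show "ppart s t (upart s t n)" using enum_props(4)[OF E] unfolding U p0 pn .
  have "\<forall>i<Suc n. p (Suc i) - p i \<le> (t - s) / real (Suc n)"
    unfolding ps by simp
  then show "pfine ((t - s) / real (Suc n)) (upart s t n)" using enum_props(5)[OF E] unfolding U by blast
qed

lemma pfine_mono: "pfine d F \<Longrightarrow> d \<le> d' \<Longrightarrow> pfine d' F"
  unfolding pfine_def by force

lemma small_h: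
  assumes "d > 0"
  shows "\<exists>n. (t - s) / real (Suc n) \<le> d"
proof -
  obtain n where n: "(t - s) / d < real n" using reals_Archimedean2 by blast
  have "(t - s) / real (Suc n) \<le> d"
  proof -
    have "t - s < d * real n" using n assms by (simp add: field_simps)
    also have "\<dots> \<le> d * real (Suc n)" using assms by simp
    finally show ?thesis by (simp add: field_simps)
  qed
  then show ?thesis by blast
qed

lemma small_h_all:
  assumes "d > 0"
  shows "\<exists>N. \<forall>n\<ge>N. (t - s) / real (Suc n) \<le> d"
proof (cases "t - s \<le> 0")
  case True
  then show ?thesis using assms by (intro exI[of _ 0]) (auto intro: order_trans[OF divide_nonpos_pos])
next
  case False
  obtain N where N: "(t - s) / real (Suc N) \<le> d" using small_h[OF assms] by blast
  have "(t - s) / real (Suc n) \<le> d" if "n \<ge> N" for n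
  proof -
    have "(t - s) / real (Suc n) \<le> (t - s) / real (Suc N)"
      using False that by (intro divide_left_mono) auto
    then show ?thesis using N by simp
  qed
  then show ?thesis by blast
qed

lemma exfine:
  assumes "s \<le> t" "d > 0"
  shows "\<exists>F. ppart s t F \<and> pfine d F"
proof (cases "s = t")
  case True
  then show ?thesis by (intro exI[of _ "{s}"]) (auto simp: ppart_def pfine_def)
next
  case False
  then have st: "s < t" using assms by simp
  obtain n where "(t - s) / real (Suc n) \<le> d" using small_h[OF assms(2)] by blast
  then show ?thesis using upart[OF st, of n] pfine_mono by blast
qed

lemma part_union:
  assumes P1: "ppart s u F1" and P2: "ppart u t F2"
  shows "ppart s t (F1 \<union> F2)" "psum X (F1 \<union> F2) = psum X F1 + psum X F2"
    "pfine d F1 \<Longrightarrow> pfine d F2 \<Longrightarrow> pfine d (F1 \<union> F2)"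
proof -
  have su: "s \<le> u" and ut: "u \<le> t" using part_le P1 P2 by auto
  have F1s: "F1 \<subseteq> {s..u}" and F2s: "F2 \<subseteq> {u..t}" and uF1: "u \<in> F1" and uF2: "u \<in> F2"
    using P1 P2 unfolding ppart_def by auto
  show P: "ppart s t (F1 \<union> F2)" using P1 P2 su ut unfolding ppart_def by auto
  have uF: "u \<in> F1 \<union> F2" using uF1 by auto
  have L: "(F1 \<union> F2) \<inter> {..u} = F1" using F1s F2s uF1 uF2 by force
  have R: "(F1 \<union> F2) \<inter> {u..} = F2" using F1s F2s uF1 uF2 by force
  show "psum X (F1 \<union> F2) = psum X F1 + psum X F2"
    using psum_split[OF P uF, of X] L R by simp
  assume f1: "pfine d F1" and f2: "pfine d F2"
  have M1: "Max F1 = u" and M2: "Max F2 = t" and M: "Max (F1 \<union> F2) = t"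
    using part_Max P1 P2 P by auto
  show "pfine d (F1 \<union> F2)" unfolding pfine_def M
  proof (intro ballI impI)
    fix w assume w: "w \<in> F1 \<union> F2" "w < t"
    show "nxt (F1 \<union> F2) w - w \<le> d"
    proof (cases "w < u")
      case True
      then have "w \<in> F1" using w F2s by auto
      moreover have "nxt (F1 \<union> F2) w = nxt F1 w"
        using nxt_lower[OF P uF w(1) True] L by simp
      ultimately show ?thesis using f1 True unfolding pfine_def M1 by auto
    next
      case False
      then have "w \<in> F2" using w F1s uF2 by auto
      moreover have "nxt (F1 \<union> F2) w = nxt F2 w"
        using nxt_upper[of u w "F1 \<union> F2"] R False by simp
      ultimately show ?thesis using f2 w unfolding pfine_def M2 by auto
    qed
  qed
qed

lemma yconv_unique:
  assumes "s \<le> t" "yconv X s t I" "yconv X s t J"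
  shows "I = J"
proof -
  have "norm (I - J) < e" if e: "e > 0" for e
  proof -
    obtain d1 where d1: "d1 > 0" "\<forall>F. ppart s t F \<and> pfine d1 F \<longrightarrow> norm (psum X F - I) < e/2"
      using assms(2) e unfolding yconv_def by (meson half_gt_zero)
    obtain d2 where d2: "d2 > 0" "\<forall>F. ppart s t F \<and> pfine d2 F \<longrightarrow> norm (psum X F - J) < e/2"
      using assms(3) e unfolding yconv_def by (meson half_gt_zero)
    obtain F where F: "ppart s t F" "pfine (min d1 d2) F" using exfine[OF assms(1), of "min d1 d2"] d1 d2 by auto
    have "norm (psum X F - I) < e/2" "norm (psum X F - J) < e/2"
      using d1 d2 F pfine_mono[OF F(2)] by auto
    then show ?thesis using norm_diff_triangle_less[of I "psum X F" "e/2" J "e/2"]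
      by (simp add: norm_minus_commute)
  qed
  then have "norm (I - J) = 0" by (metis dual_order.irrefl norm_ge_zero order_le_less)
  then show ?thesis by simp
qed

lemma yconv_diff:
  assumes "yconv X s t I" "yconv Y s t J"
  shows "yconv (\<lambda>a b. X a b - Y a b) s t (I - J)"
  unfolding yconv_def
proof (intro allI impI)
  fix e :: real assume e: "e > 0"
  obtain d1 where d1: "d1 > 0" "\<forall>F. ppart s t F \<and> pfine d1 F \<longrightarrow> norm (psum X F - I) < e/2"
    using assms(1) e unfolding yconv_def by (meson half_gt_zero)
  obtain d2 where d2: "d2 > 0" "\<forall>F. ppart s t F \<and> pfine d2 F \<longrightarrow> norm (psum Y F - J) < e/2"
    using assms(2) e unfolding yconv_def by (meson half_gt_zero)
  show "\<exists>d>0. \<forall>F. ppart s t F \<and> pfine d F \<longrightarrow> norm (psum (\<lambda>a b. X a b - Y a b) F - (I - J)) < e"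
  proof (intro exI[of _ "min d1 d2"] conjI allI impI)
    fix F assume F: "ppart s t F \<and> pfine (min d1 d2) F"
    have a: "norm (psum X F - I) < e/2" "norm (psum Y F - J) < e/2"
      using d1 d2 F pfine_mono by auto
    have "psum (\<lambda>a b. X a b - Y a b) F - (I - J) = (psum X F - I) - (psum Y F - J)"
      by (simp add: psum_diff)
    also have "norm \<dots> < e" using a norm_triangle_ineq4[of "psum X F - I" "psum Y F - J"] by simp
    finally show "norm (psum (\<lambda>a b. X a b - Y a b) F - (I - J)) < e" .
  qed (use d1 d2 in auto)
qed

lemma yconv_sub:
  assumes "a \<le> s" "s \<le> t" "yconv X a t It" "yconv X a s Is"
  shows "yconv X s t (It - Is)"
  unfolding yconv_def
proof (intro allI impI)
  fix e :: real assume e: "e > 0"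
  obtain d1 where d1: "d1 > 0" "\<forall>F. ppart a t F \<and> pfine d1 F \<longrightarrow> norm (psum X F - It) < e/2"
    using assms(3) e unfolding yconv_def by (meson half_gt_zero)
  obtain d2 where d2: "d2 > 0" "\<forall>F. ppart a s F \<and> pfine d2 F \<longrightarrow> norm (psum X F - Is) < e/2"
    using assms(4) e unfolding yconv_def by (meson half_gt_zero)
  show "\<exists>d>0. \<forall>F. ppart s t F \<and> pfine d F \<longrightarrow> norm (psum X F - (It - Is)) < e"
  proof (intro exI[of _ "min d1 d2"] conjI allI impI)
    fix G assume G: "ppart s t G \<and> pfine (min d1 d2) G"
    obtain F1 where F1: "ppart a s F1" "pfine (min d1 d2) F1"
      using exfine[OF assms(1), of "min d1 d2"] d1 d2 by auto
    have U: "ppart a t (F1 \<union> G)" "psum X (F1 \<union> G) = psum X F1 + psum X G"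
      "pfine (min d1 d2) (F1 \<union> G)"
      using part_union[OF F1(1), of t G] G F1 by auto
    have n1: "norm (psum X (F1 \<union> G) - It) < e/2" using d1 U pfine_mono[OF U(3)] by auto
    have n2: "norm (psum X F1 - Is) < e/2" using d2 F1 pfine_mono[OF F1(2)] by auto
    have "psum X G - (It - Is) = (psum X (F1 \<union> G) - It) - (psum X F1 - Is)"
      using U(2) by (simp add: algebra_simps)
    also have "norm \<dots> < e" using n1 n2 norm_triangle_ineq4[of "psum X (F1 \<union> G) - It" "psum X F1 - Is"] by simp
    finally show "norm (psum X G - (It - Is)) < e" .
  qed (use d1 d2 in auto)
qed

lemma small_pow:
  fixes q c e :: real
  assumes q: "q > 0" and c: "c \<ge> 0" and e: "e > 0"
  shows "\<exists>d>0. \<forall>d'. 0 \<le> d' \<longrightarrow> d' \<le> d \<longrightarrow> c * d' powr q < e"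
proof -
  define d where "d = (e / (2 * c + 1)) powr (1 / q)"
  have d0: "d > 0" unfolding d_def using e c by simp
  have dq: "d powr q = e / (2 * c + 1)" unfolding d_def using q e c by (simp add: powr_powr)
  have "c * d' powr q < e" if "0 \<le> d'" "d' \<le> d" for d'
  proof -
    have "c * d' powr q \<le> c * d powr q" using that c q by (intro mult_left_mono powr_mono2) auto
    also have "\<dots> = c * e / (2 * c + 1)" unfolding dq by simp
    also have "\<dots> < e" using c e by (simp add: field_simps) (smt (verit) mult_pos_pos mult_nonneg_nonneg)
    finally show ?thesis .
  qed
  then show ?thesis using d0 by blast
qed


lemma norm3:
  fixes a b c d :: "'a::real_normed_vector"
  shows "norm (a - b) \<le> norm (c - a) + norm (c - d) + norm (d - b)"
proof -
  have "a - b = (c - d) - (c - a) + (d - b)" by (simp add: algebra_simps)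
  then have "norm (a - b) \<le> norm ((c - d) - (c - a)) + norm (d - b)" by (metis norm_triangle_ineq)
  also have "norm ((c - d) - (c - a)) \<le> norm (c - d) + norm (c - a)" by (rule norm_triangle_ineq4)
  finally show ?thesis by simp
qed

lemma sewing:
  fixes X :: "real \<Rightarrow> real \<Rightarrow> 'a::banach"
  assumes th: "th > 1" and C: "C \<ge> 0"
   and H: "\<And>p q r. s \<le> p \<Longrightarrow> p \<le> q \<Longrightarrow> q \<le> r \<Longrightarrow> r \<le> t \<Longrightarrow>
            norm (X p r - X p q - X q r) \<le> C * (r - p) powr th"
   and st: "s \<le> t"
  shows "\<exists>I. yconv X s t I \<and> norm (I - X s t) \<le> sM th * C * (t - s) powr th"
proof (cases "s = t")
  case True
  have X0: "X s s = 0" using H[of s s s] True by simp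
  have "yconv X s t 0" unfolding yconv_def
  proof (intro allI impI exI[of _ 1] conjI)
    fix e F assume "(e::real) > 0" "ppart s t F \<and> pfine 1 F"
    then show "norm (psum X F - 0) < e" using True by (auto simp: ppart_def psum_single
        dest!: subset_singletonD)
  qed auto
  then show ?thesis using X0 True by auto
next
  case False
  then have st: "s < t" using st by simp
  define \<sigma> where "\<sigma> n = psum X (upart s t n)" for n
  define h where "h n = (t - s) / real (Suc n)" for n
  define K0 where "K0 = sM th * C * (t - s)"
  have K0: "K0 \<ge> 0" unfolding K0_def using sM_props[OF th] C st by simp
  have th1: "th - 1 > 0" using th by simp
  have h0: "h n \<ge> 0" for n unfolding h_def using st by simp
  have UP: "ppart s t (upart s t n)" "pfine (h n) (upart s t n)" for n
    using upart[OF st] unfolding h_def by auto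
  have RB: "norm (psum X G - psum X F) \<le> K0 * d powr (th - 1)"
    if "ppart s t F" "ppart s t G" "F \<subseteq> G" "pfine d F" for F G d
    using refine_bound[OF th C H that] unfolding K0_def by (simp add: algebra_simps)
  have PU: "ppart s t (F \<union> G)" if "ppart s t F" "ppart s t G" for F G
    using that unfolding ppart_def by auto
  have "Cauchy \<sigma>" unfolding Cauchy_def
  proof (intro allI impI)
    fix e :: real assume e: "e > 0"
    obtain d where d: "d > 0" "\<And>d'. 0 \<le> d' \<Longrightarrow> d' \<le> d \<Longrightarrow> K0 * d' powr (th - 1) < e / 2"
      using small_pow[OF th1 K0, of "e/2"] e by auto
    obtain N where N: "\<And>n. n \<ge> N \<Longrightarrow> h n \<le> d" using small_h_all[OF d(1), of t s] unfolding h_def by auto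
    show "\<exists>M. \<forall>m\<ge>M. \<forall>n\<ge>M. dist (\<sigma> m) (\<sigma> n) < e"
    proof (intro exI[of _ N] allI impI)
      fix m n assume mn: "m \<ge> N" "n \<ge> N"
      define G where "G = upart s t m \<union> upart s t n"
      have PG: "ppart s t G" unfolding G_def using PU UP by auto
      have a: "norm (psum X G - \<sigma> m) < e/2"
        using RB[OF UP(1) PG _ UP(2), of m] d(2)[OF h0 N[OF mn(1)]] unfolding G_def \<sigma>_def by auto
      have b: "norm (psum X G - \<sigma> n) < e/2"
        using RB[OF UP(1) PG _ UP(2), of n] d(2)[OF h0 N[OF mn(2)]] unfolding G_def \<sigma>_def by auto
      have "dist (\<sigma> m) (\<sigma> n) \<le> norm (psum X G - \<sigma> m) + norm (psum X G - \<sigma> n)"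
        unfolding dist_norm using norm3[of "\<sigma> m" "\<sigma> n" "psum X G" "psum X G"] by simp
      then show "dist (\<sigma> m) (\<sigma> n) < e" using a b by simp
    qed
  qed
  then obtain I where I: "\<sigma> \<longlonglongrightarrow> I" using Cauchy_convergent_iff convergent_def by blast
  have yc: "yconv X s t I" unfolding yconv_def
  proof (intro allI impI)
    fix e :: real assume e: "e > 0"
    obtain d where d: "d > 0" "\<And>d'. 0 \<le> d' \<Longrightarrow> d' \<le> d \<Longrightarrow> K0 * d' powr (th - 1) < e / 3"
      using small_pow[OF th1 K0, of "e/3"] e by auto
    obtain N2 where N2: "\<And>n. n \<ge> N2 \<Longrightarrow> h n \<le> d" using small_h_all[OF d(1), of t s] unfolding h_def by auto
    obtain N1 where N1: "\<And>n. n \<ge> N1 \<Longrightarrow> norm (\<sigma> n - I) < e/3"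
      using I e unfolding LIMSEQ_iff by (meson divide_pos_pos zero_less_numeral)
    define n where "n = max N1 N2"
    show "\<exists>d>0. \<forall>F. ppart s t F \<and> pfine d F \<longrightarrow> norm (psum X F - I) < e"
    proof (intro exI[of _ d] conjI allI impI)
      fix F assume F: "ppart s t F \<and> pfine d F"
      define G where "G = F \<union> upart s t n"
      have PG: "ppart s t G" unfolding G_def using PU UP F by auto
      have a: "norm (psum X G - psum X F) < e/3"
        using RB[of F G d] F PG d(2)[OF less_imp_le[OF d(1)] order_refl] unfolding G_def by auto
      have hn: "K0 * h n powr (th - 1) < e/3" using d(2)[OF h0 N2[of n]] unfolding n_def by auto
      have b: "norm (psum X G - \<sigma> n) < e/3"
        using RB[OF UP(1) PG _ UP(2), of n] hn unfolding G_def \<sigma>_def by auto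
      have c: "norm (\<sigma> n - I) < e/3" using N1 unfolding n_def by auto
      have "norm (psum X F - I) \<le> norm (psum X G - psum X F) + norm (psum X G - \<sigma> n) + norm (\<sigma> n - I)"
        by (rule norm3)
      then show "norm (psum X F - I) < e" using a b c by simp
    qed (use d in auto)
  qed
  have bd: "norm (\<sigma> n - X s t) \<le> sM th * C * (t - s) powr th" for n
    unfolding \<sigma>_def by (rule sewing_bound[OF th C H UP(1)]) auto
  have "(\<lambda>n. norm (\<sigma> n - X s t)) \<longlonglongrightarrow> norm (I - X s t)"
    by (intro tendsto_norm tendsto_diff I tendsto_const)
  then have "norm (I - X s t) \<le> sM th * C * (t - s) powr th"
    by (rule LIMSEQ_le_const2) (use bd in auto)
  then show ?thesis using yc by auto
qed


definition germ :: "(real \<Rightarrow> 'v \<Rightarrow> 'w::real_normed_vector) \<Rightarrow> (real \<Rightarrow> 'v) \<Rightarrow> real \<Rightarrow> real \<Rightarrow> 'w" where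
  "germ A x a b = A b (x a) - A a (x a)"

lemma hy_to_yconv:
  assumes "has_young_integral A x s t I"
  shows "yconv (germ A x) s t I"
  unfolding yconv_def
proof (intro allI impI)
  fix e :: real assume e: "e > 0"
  obtain d where d: "d > 0" and H: "\<And>n p. p 0 = s \<and> p n = t \<and> (\<forall>i<n. p i < p (Suc i) \<and> p (Suc i) - p i < d) \<Longrightarrow>
      norm ((\<Sum>i<n. A (p (Suc i)) (x (p i)) - A (p i) (x (p i))) - I) < e"
    using assms e unfolding has_young_integral_def by meson
  show "\<exists>d>0. \<forall>F. ppart s t F \<and> pfine d F \<longrightarrow> norm (psum (germ A x) F - I) < e"
  proof (intro exI[of _ "d/2"] conjI allI impI)
    fix F assume F: "ppart s t F \<and> pfine (d/2) F"
    obtain n p where np: "\<forall>i<n. p i < (p (Suc i) :: real)" "F = p ` {..n}" "p 0 = s" "p n = t"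
      using part_enum F by blast
    have g: "\<forall>i<n. p (Suc i) - p i \<le> d/2" using enum_props(5)[OF np(1)] F np(2) by auto
    have "norm ((\<Sum>i<n. A (p (Suc i)) (x (p i)) - A (p i) (x (p i))) - I) < e"
      using H[of p n] np g d by force
    then show "norm (psum (germ A x) F - I) < e"
      unfolding np(2) enum_props(3)[OF np(1)] germ_def .
  qed (use d in auto)
qed

lemma yconv_to_hy:
  assumes "yconv (germ A x) s t I"
  shows "has_young_integral A x s t I"
  unfolding has_young_integral_def
proof (intro allI impI)
  fix e :: real assume e: "e > 0"
  obtain d where d: "d > 0" "\<forall>F. ppart s t F \<and> pfine d F \<longrightarrow> norm (psum (germ A x) F - I) < e"
    using assms e unfolding yconv_def by meson
  show "\<exists>d>0. \<forall>n p. p 0 = s \<and> p n = t \<and> (\<forall>i<n. p i < p (Suc i) \<and> p (Suc i) - p i < d) \<longrightarrow>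
      norm ((\<Sum>i<n. A (p (Suc i)) (x (p i)) - A (p i) (x (p i))) - I) < e"
  proof (intro exI[of _ d] conjI allI impI)
    fix n p assume np: "p 0 = s \<and> p n = t \<and> (\<forall>i<n. p i < p (Suc i) \<and> p (Suc i) - p i < d)"
    then have E: "\<forall>i<n. p i < (p (Suc i) :: real)" by auto
    have P: "ppart s t (p ` {..n})" using enum_props(4)[OF E] np by simp
    have fi: "pfine d (p ` {..n})" using enum_props(5)[OF E] np by (auto simp: less_imp_le)
    have "norm (psum (germ A x) (p ` {..n}) - I) < e" using d P fi by auto
    then show "norm ((\<Sum>i<n. A (p (Suc i)) (x (p i)) - A (p i) (x (p i))) - I) < e"
      unfolding enum_props(3)[OF E] germ_def .
  qed (use d in auto)
qed


locale yde =
  fixes T \<alpha> \<beta> :: real and A :: "real \<Rightarrow> 'v::banach \<Rightarrow> 'v" and DA :: "real \<Rightarrow> 'v \<Rightarrow> ('v \<Rightarrow>\<^sub>L 'v)"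
    and K :: real
  assumes T: "T > 0" and al: "0 < \<alpha>" "\<alpha> < 1" and be: "0 < \<beta>" "\<beta> < 1" and ab: "\<alpha> * (1 + \<beta>) > 1"
    and K: "K > 0"
    and Ab: "\<And>s t x. 0 \<le> s \<Longrightarrow> s \<le> t \<Longrightarrow> t \<le> T \<Longrightarrow> norm (A t x - A s x) \<le> K * (t - s) powr \<alpha>"
    and Ad: "\<And>t x. 0 \<le> t \<Longrightarrow> t \<le> T \<Longrightarrow> (A t has_derivative blinfun_apply (DA t x)) (at x)"
    and Db: "\<And>s t x. 0 \<le> s \<Longrightarrow> s \<le> t \<Longrightarrow> t \<le> T \<Longrightarrow> norm (DA t x - DA s x) \<le> K * (t - s) powr \<alpha>"
    and Dh: "\<And>s t x y. 0 \<le> s \<Longrightarrow> s \<le> t \<Longrightarrow> t \<le> T \<Longrightarrow>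
        norm ((DA t x - DA s x) - (DA t y - DA s y)) \<le> K * (t - s) powr \<alpha> * norm (x - y) powr \<beta>"
begin

lemma Lip:
  assumes "0 \<le> s" "s \<le> t" "t \<le> T"
  shows "norm ((A t x - A s x) - (A t y - A s y)) \<le> K * (t - s) powr \<alpha> * norm (x - y)"
proof -
  have der: "((\<lambda>w. A t w - A s w) has_derivative blinfun_apply (DA t w - DA s w)) (at w within UNIV)" for w
  proof -
    have "((\<lambda>w. A t w - A s w) has_derivative (\<lambda>h. blinfun_apply (DA t w) h - blinfun_apply (DA s w) h)) (at w)"
      using Ad[of t w] Ad[of s w] assms by (intro has_derivative_diff) auto
    moreover have "blinfun_apply (DA t w - DA s w) = (\<lambda>h. blinfun_apply (DA t w) h - blinfun_apply (DA s w) h)"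
      by (rule ext) (simp add: blinfun.diff_left)
    ultimately show ?thesis by simp
  qed
  have on: "onorm (blinfun_apply (DA t w - DA s w)) \<le> K * (t - s) powr \<alpha>" for w
    using Db[OF assms, of w] by (simp add: norm_blinfun.rep_eq[symmetric])
  show ?thesis using differentiable_bound[OF convex_UNIV der on, of x y] by simp
qed

lemma four_point:
  assumes u: "0 \<le> u" "u \<le> t" "t \<le> T"
  defines "f \<equiv> \<lambda>w. A t w - A u w"
  shows "norm (f a - f b - f c + f d) \<le>
    K * (t - u) powr \<alpha> * (norm (a - b - c + d) + (max (norm (a - b)) (norm (c - d))) powr \<beta> * norm (b - d))"
proof -
  define D where "D w = DA t w - DA u w" for w
  define B where "B = K * (t - u) powr \<alpha> * (norm (a - b - c + d) + (max (norm (a - b)) (norm (c - d))) powr \<beta> * norm (b - d))"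
  have fder: "(f has_derivative blinfun_apply (D w)) (at w)" for w
  proof -
    have "(f has_derivative (\<lambda>h. blinfun_apply (DA t w) h - blinfun_apply (DA u w) h)) (at w)"
      unfolding f_def using Ad[of t w] Ad[of u w] u by (intro has_derivative_diff) auto
    moreover have "blinfun_apply (D w) = (\<lambda>h. blinfun_apply (DA t w) h - blinfun_apply (DA u w) h)"
      unfolding D_def by (rule ext) (simp add: blinfun.diff_left)
    ultimately show ?thesis by simp
  qed
  define p where "p l = c + l *\<^sub>R (a - c)" for l
  define q where "q l = d + l *\<^sub>R (b - d)" for l
  define g where "g l = f (p l) - f (q l)" for l
  define g' where "g' l = blinfun_apply (D (p l)) (a - c) - blinfun_apply (D (q l)) (b - d)" for l
  have gder: "(g has_vector_derivative g' l) (at l)" for l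
  proof -
    have pd: "(p has_derivative (\<lambda>h. h *\<^sub>R (a - c))) (at l)" unfolding p_def
      by (auto intro!: derivative_eq_intros)
    have qd: "(q has_derivative (\<lambda>h. h *\<^sub>R (b - d))) (at l)" unfolding q_def
      by (auto intro!: derivative_eq_intros)
    have 1: "((\<lambda>l. f (p l)) has_derivative (\<lambda>h. blinfun_apply (D (p l)) (h *\<^sub>R (a - c)))) (at l)"
      by (rule has_derivative_compose[OF pd fder])
    have 2: "((\<lambda>l. f (q l)) has_derivative (\<lambda>h. blinfun_apply (D (q l)) (h *\<^sub>R (b - d)))) (at l)"
      by (rule has_derivative_compose[OF qd fder])
    have "(g has_derivative (\<lambda>h. blinfun_apply (D (p l)) (h *\<^sub>R (a - c)) - blinfun_apply (D (q l)) (h *\<^sub>R (b - d)))) (at l)"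
      unfolding g_def by (rule has_derivative_diff[OF 1 2])
    moreover have "(\<lambda>h. blinfun_apply (D (p l)) (h *\<^sub>R (a - c)) - blinfun_apply (D (q l)) (h *\<^sub>R (b - d))) = (\<lambda>h. h *\<^sub>R g' l)"
      unfolding g'_def by (rule ext) (simp only: blinfun.scaleR_right scaleR_diff_right[symmetric])
    ultimately show ?thesis unfolding has_vector_derivative_def by simp
  qed
  have gcont: "continuous_on {0..1} g"
    using gder by (intro continuous_at_imp_continuous_on) (meson has_vector_derivative_continuous)
  have phid: "((\<lambda>l. l * B) has_vector_derivative B) (at l)" for l
    by (auto simp: has_vector_derivative_def intro!: derivative_eq_intros)
  have bnd: "norm (g' l) \<le> B" if l: "0 < l" "l < 1" for l
  proof -
    have Dn: "norm (D w) \<le> K * (t - u) powr \<alpha>" for w unfolding D_def using Db[OF u] .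
    have Dd: "norm (D w - D w') \<le> K * (t - u) powr \<alpha> * norm (w - w') powr \<beta>" for w w'
      unfolding D_def using Dh[OF u] .
    have split: "g' l = blinfun_apply (D (p l)) (a - b - c + d) + blinfun_apply (D (p l) - D (q l)) (b - d)"
      unfolding g'_def by (simp add: blinfun.diff_left blinfun.diff_right blinfun.add_right algebra_simps)
    have n1: "norm (blinfun_apply (D (p l)) (a - b - c + d)) \<le> K * (t - u) powr \<alpha> * norm (a - b - c + d)"
      by (rule order_trans[OF norm_blinfun]) (intro mult_right_mono Dn, simp)
    have pq: "p l - q l = (1 - l) *\<^sub>R (c - d) + l *\<^sub>R (a - b)"
      unfolding p_def q_def by (simp add: algebra_simps)
    have "norm (p l - q l) \<le> (1 - l) * norm (c - d) + l * norm (a - b)"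
      unfolding pq using l norm_triangle_ineq[of "(1 - l) *\<^sub>R (c - d)" "l *\<^sub>R (a - b)"] by simp
    also have "\<dots> \<le> (1 - l) * max (norm (a - b)) (norm (c - d)) + l * max (norm (a - b)) (norm (c - d))"
      using l by (intro add_mono mult_left_mono) auto
    finally have pq': "norm (p l - q l) \<le> max (norm (a - b)) (norm (c - d))" by (simp add: algebra_simps)
    have n2: "norm (blinfun_apply (D (p l) - D (q l)) (b - d)) \<le>
        K * (t - u) powr \<alpha> * (max (norm (a - b)) (norm (c - d))) powr \<beta> * norm (b - d)"
    proof -
      have "norm (blinfun_apply (D (p l) - D (q l)) (b - d)) \<le> norm (D (p l) - D (q l)) * norm (b - d)"
        by (rule norm_blinfun)
      also have "\<dots> \<le> K * (t - u) powr \<alpha> * norm (p l - q l) powr \<beta> * norm (b - d)"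
        by (intro mult_right_mono Dd) auto
      also have "\<dots> \<le> K * (t - u) powr \<alpha> * (max (norm (a - b)) (norm (c - d))) powr \<beta> * norm (b - d)"
        using K be pq' by (intro mult_right_mono mult_left_mono powr_mono2) auto
      finally show ?thesis .
    qed
    have "norm (g' l) \<le> norm (blinfun_apply (D (p l)) (a - b - c + d)) + norm (blinfun_apply (D (p l) - D (q l)) (b - d))"
      unfolding split by (rule norm_triangle_ineq)
    also have "\<dots> \<le> B" using n1 n2 unfolding B_def by (simp add: algebra_simps)
    finally show ?thesis .
  qed
  have "norm (g 1 - g 0) \<le> 1 * B - 0 * B"
    by (rule differentiable_bound_general[OF zero_less_one gcont _ gder phid bnd])
      (auto intro!: continuous_intros)
  moreover have "g 1 - g 0 = f a - f b - f c + f d" unfolding g_def p_def q_def by (simp add: algebra_simps)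
  ultimately show ?thesis unfolding B_def by simp
qed

end


definition hold :: "real \<Rightarrow> real \<Rightarrow> real \<Rightarrow> real \<Rightarrow> (real \<Rightarrow> 'v::real_normed_vector) \<Rightarrow> bool" where
  "hold e R a b x \<longleftrightarrow> (\<forall>s t. a \<le> s \<longrightarrow> s \<le> t \<longrightarrow> t \<le> b \<longrightarrow> norm (x t - x s) \<le> R * (t - s) powr e)"

lemma holdD: "hold e R a b x \<Longrightarrow> a \<le> s \<Longrightarrow> s \<le> t \<Longrightarrow> t \<le> b \<Longrightarrow> norm (x t - x s) \<le> R * (t - s) powr e"
  unfolding hold_def by blast

lemma powr_le_h:
  fixes r h e :: real
  assumes "0 \<le> r" "r \<le> h" "e \<ge> 0"
  shows "r powr e \<le> h powr e"
  using assms by (intro powr_mono2) auto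

context yde
begin

lemma germ_delta:
  "germ A x p r - germ A x p q - germ A x q r = (A r (x p) - A q (x p)) - (A r (x q) - A q (x q))"
  unfolding germ_def by (simp add: algebra_simps)

lemma germ_bound:
  assumes "0 \<le> s" "s \<le> t" "t \<le> T"
  shows "norm (germ A x s t) \<le> K * (t - s) powr \<alpha>"
  unfolding germ_def using Ab[OF assms] .

lemma germ_delta_bound:
  assumes H: "hold e R a b x" and ab: "0 \<le> a" "b \<le> T" and R: "R \<ge> 0" and e: "e \<ge> 0"
    and pqr: "a \<le> p" "p \<le> q" "q \<le> r" "r \<le> b"
  shows "norm (germ A x p r - germ A x p q - germ A x q r) \<le> K * R * (r - p) powr (\<alpha> + e)"
proof -
  have "norm (germ A x p r - germ A x p q - germ A x q r) \<le> K * (r - q) powr \<alpha> * norm (x p - x q)"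
    unfolding germ_delta using Lip[of q r "x p" "x q"] pqr ab by simp
  also have "\<dots> \<le> K * (r - p) powr \<alpha> * (R * (r - p) powr e)"
  proof (intro mult_mono mult_left_mono)
    show "(r - q) powr \<alpha> \<le> (r - p) powr \<alpha>" using pqr al by (intro powr_mono2) auto
    have "norm (x p - x q) \<le> R * (q - p) powr e" using holdD[OF H, of p q] pqr by (simp add: norm_minus_commute)
    also have "\<dots> \<le> R * (r - p) powr e" using pqr R e by (intro mult_left_mono powr_mono2) auto
    finally show "norm (x p - x q) \<le> R * (r - p) powr e" .
  qed (use K in auto)
  also have "\<dots> = K * R * (r - p) powr (\<alpha> + e)" by (simp add: powr_add)
  finally show ?thesis .
qed

lemma germ_sewing:
  assumes H: "hold e R a b x" and ab: "0 \<le> a" "b \<le> T" and R: "R \<ge> 0" and e: "e \<ge> 0"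
    and ae: "\<alpha> + e > 1" and st: "a \<le> s" "s \<le> t" "t \<le> b"
  shows "\<exists>I. yconv (germ A x) s t I \<and> norm (I - germ A x s t) \<le> sM (\<alpha> + e) * (K * R) * (t - s) powr (\<alpha> + e)"
  by (rule sewing[OF ae]) (use K R germ_delta_bound[OF H ab R e] st in auto)

lemma davie_from_yconv:
  assumes H: "hold e R a b x" and ab: "0 \<le> a" "b \<le> T" and R: "R \<ge> 0" and e: "e \<ge> 0"
    and ae: "\<alpha> + e > 1" and st: "a \<le> s" "s \<le> t" "t \<le> b"
    and Y: "yconv (germ A x) s t (x t - x s)"
  shows "norm (x t - x s - germ A x s t) \<le> sM (\<alpha> + e) * (K * R) * (t - s) powr (\<alpha> + e)"
proof -
  obtain I where I: "yconv (germ A x) s t I" "norm (I - germ A x s t) \<le> sM (\<alpha> + e) * (K * R) * (t - s) powr (\<alpha> + e)"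
    using germ_sewing[OF assms(1-9)] by blast
  have "I = x t - x s" using yconv_unique[OF st(2) I(1) Y] .
  then show ?thesis using I(2) by simp
qed

lemma hold_from_davie:
  assumes ab: "0 \<le> a" "a \<le> b" "b \<le> T" and D: "D \<ge> 0" and e: "e \<ge> 0"
    and dv: "\<And>s t. a \<le> s \<Longrightarrow> s \<le> t \<Longrightarrow> t \<le> b \<Longrightarrow> norm (x t - x s - germ A x s t) \<le> D * (t - s) powr (\<alpha> + e)"
  shows "hold \<alpha> (K + D * (b - a) powr e) a b x"
  unfolding hold_def
proof (intro allI impI)
  fix s t assume st: "a \<le> s" "s \<le> t" "t \<le> b"
  have "norm (x t - x s) \<le> norm (germ A x s t) + norm (x t - x s - germ A x s t)"
    by (metis add.commute diff_add_cancel norm_triangle_ineq)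
  also have "\<dots> \<le> K * (t - s) powr \<alpha> + D * ((t - s) powr \<alpha> * (b - a) powr e)"
  proof (intro add_mono)
    show "norm (germ A x s t) \<le> K * (t - s) powr \<alpha>" using germ_bound st ab by auto
    have "norm (x t - x s - germ A x s t) \<le> D * (t - s) powr (\<alpha> + e)" using dv st by auto
    also have "\<dots> = D * ((t - s) powr \<alpha> * (t - s) powr e)" by (simp add: powr_add)
    also have "\<dots> \<le> D * ((t - s) powr \<alpha> * (b - a) powr e)"
      using D e st by (intro mult_left_mono powr_mono2) auto
    finally show "norm (x t - x s - germ A x s t) \<le> D * ((t - s) powr \<alpha> * (b - a) powr e)" .
  qed
  also have "\<dots> = (K + D * (b - a) powr e) * (t - s) powr \<alpha>" by (simp add: algebra_simps)
  finally show "norm (x t - x s) \<le> (K + D * (b - a) powr e) * (t - s) powr \<alpha>" .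
qed

definition qf :: "real \<Rightarrow> real \<Rightarrow> real" where
  "qf h R = K * h powr \<alpha> + sM (\<alpha> + \<alpha> * \<beta>) * K * (h powr \<alpha> + R powr \<beta> * h powr (\<alpha> + \<alpha> * \<beta>))"

lemma contraction:
  assumes ab: "0 \<le> a" "a \<le> b" "b \<le> T" "b - a \<le> h" and R: "R \<ge> 0" and Z: "Z \<ge> 0"
    and Hx: "hold \<alpha> R a b x" and Hy: "hold \<alpha> R a b y" and xy: "x a = y a"
    and Hz: "hold \<alpha> Z a b (\<lambda>t. x t - y t)"
    and yu: "\<And>s t. a \<le> s \<Longrightarrow> s \<le> t \<Longrightarrow> t \<le> b \<Longrightarrow> yconv (germ A x) s t (u t - u s)"
    and yv: "\<And>s t. a \<le> s \<Longrightarrow> s \<le> t \<Longrightarrow> t \<le> b \<Longrightarrow> yconv (germ A y) s t (v t - v s)"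
  shows "hold \<alpha> (Z * qf h R) a b (\<lambda>t. u t - v t)"
  unfolding hold_def
proof (intro allI impI)
  fix s t assume st: "a \<le> s" "s \<le> t" "t \<le> b"
  define th where "th = \<alpha> + \<alpha> * \<beta>"
  have th1: "th > 1" using ab unfolding th_def using yde.ab yde_axioms by (simp add: algebra_simps)
  have h0: "h \<ge> 0" using ab by simp
  define W where "W p r = germ A x p r - germ A y p r" for p r
  define C' where "C' = K * Z * (h powr (\<alpha> - \<alpha> * \<beta>) + R powr \<beta> * h powr \<alpha>)"
  have C': "C' \<ge> 0" unfolding C'_def using K Z by simp
  have zq: "norm (x q - y q) \<le> Z * h powr \<alpha>" if "a \<le> q" "q \<le> b" for q
  proof -
    have "norm (x q - y q) = norm ((x q - y q) - (x a - y a))" using xy by simp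
    also have "\<dots> \<le> Z * (q - a) powr \<alpha>" using holdD[OF Hz, of a q] that ab by simp
    also have "\<dots> \<le> Z * h powr \<alpha>" using that ab Z al by (intro mult_left_mono powr_mono2) auto
    finally show ?thesis .
  qed
  have dW: "norm (W p r - W p q - W q r) \<le> C' * (r - p) powr th"
    if pqr: "s \<le> p" "p \<le> q" "q \<le> r" "r \<le> t" for p q r
  proof -
    have eq: "W p r - W p q - W q r = (A r (x p) - A q (x p)) - (A r (x q) - A q (x q))
        - (A r (y p) - A q (y p)) + (A r (y q) - A q (y q))"
      unfolding W_def germ_def by (simp add: algebra_simps)
    have "norm (W p r - W p q - W q r) \<le> K * (r - q) powr \<alpha> * (norm (x p - x q - y p + y q)
         + (max (norm (x p - x q)) (norm (y p - y q))) powr \<beta> * norm (x q - y q))"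
      unfolding eq by (rule four_point) (use pqr st ab in auto)
    also have "\<dots> \<le> K * (r - p) powr \<alpha> * (Z * (r - p) powr \<alpha> + (R * (r - p) powr \<alpha>) powr \<beta> * (Z * h powr \<alpha>))"
    proof (intro mult_mono add_mono mult_left_mono)
      show "(r - q) powr \<alpha> \<le> (r - p) powr \<alpha>" using pqr al by (intro powr_mono2) auto
      have "norm (x p - x q - y p + y q) = norm ((x q - y q) - (x p - y p))" by (simp add: algebra_simps norm_minus_commute)
      also have "\<dots> \<le> Z * (q - p) powr \<alpha>" using holdD[OF Hz, of p q] pqr st by simp
      also have "\<dots> \<le> Z * (r - p) powr \<alpha>" using pqr Z al by (intro mult_left_mono powr_mono2) auto
      finally show "norm (x p - x q - y p + y q) \<le> Z * (r - p) powr \<alpha>" .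
      have mx: "max (norm (x p - x q)) (norm (y p - y q)) \<le> R * (r - p) powr \<alpha>"
      proof -
        have "norm (x p - x q) \<le> R * (q - p) powr \<alpha>" "norm (y p - y q) \<le> R * (q - p) powr \<alpha>"
          using holdD[OF Hx, of p q] holdD[OF Hy, of p q] pqr st by (auto simp: norm_minus_commute)
        moreover have "R * (q - p) powr \<alpha> \<le> R * (r - p) powr \<alpha>" using pqr R al by (intro mult_left_mono powr_mono2) auto
        ultimately show ?thesis by simp
      qed
      show "(max (norm (x p - x q)) (norm (y p - y q))) powr \<beta> \<le> (R * (r - p) powr \<alpha>) powr \<beta>"
        using mx be by (intro powr_mono2) (auto simp: le_max_iff_disj)
      show "norm (x q - y q) \<le> Z * h powr \<alpha>" using zq pqr st by auto
    qed (use K R Z in auto)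
    also have "\<dots> = K * Z * ((r - p) powr (\<alpha> + \<alpha>) + R powr \<beta> * h powr \<alpha> * (r - p) powr th)"
    proof -
      have "(R * (r - p) powr \<alpha>) powr \<beta> = R powr \<beta> * (r - p) powr (\<alpha> * \<beta>)"
        using R pqr by (simp add: powr_mult powr_powr)
      moreover have e2: "(r - p) powr (\<alpha> + \<alpha>) = (r - p) powr \<alpha> * (r - p) powr \<alpha>" by (rule powr_add)
      moreover have e3: "(r - p) powr (\<alpha> + \<alpha> * \<beta>) = (r - p) powr \<alpha> * (r - p) powr (\<alpha> * \<beta>)" by (rule powr_add)
      ultimately show ?thesis unfolding th_def by (simp only: algebra_simps)
    qed
    also have "\<dots> \<le> K * Z * (h powr (\<alpha> - \<alpha> * \<beta>) * (r - p) powr th + R powr \<beta> * h powr \<alpha> * (r - p) powr th)"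
    proof (intro mult_left_mono add_mono order_refl)
      have "(r - p) powr (\<alpha> + \<alpha>) = (r - p) powr (\<alpha> - \<alpha> * \<beta>) * (r - p) powr th"
        unfolding th_def by (simp add: powr_add[symmetric])
      also have "\<dots> \<le> h powr (\<alpha> - \<alpha> * \<beta>) * (r - p) powr th"
        using pqr st ab al be by (intro mult_right_mono powr_mono2) (auto simp: mult_le_cancel_left1)
      finally show "(r - p) powr (\<alpha> + \<alpha>) \<le> h powr (\<alpha> - \<alpha> * \<beta>) * (r - p) powr th" .
    qed (use K Z in auto)
    also have "\<dots> = C' * (r - p) powr th" unfolding C'_def by (simp add: algebra_simps)
    finally show ?thesis .
  qed
  obtain I where I: "yconv W s t I" "norm (I - W s t) \<le> sM th * C' * (t - s) powr th"
    using sewing[OF th1 C' dW st(2)] by blast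
  have "yconv W s t ((u t - u s) - (v t - v s))"
    unfolding W_def by (rule yconv_diff) (use yu yv st in auto)
  then have II: "I = (u t - u s) - (v t - v s)" using yconv_unique[OF st(2) I(1)] by simp
  have Wb: "norm (W s t) \<le> K * (t - s) powr \<alpha> * (Z * h powr \<alpha>)"
  proof -
    have "norm (W s t) \<le> K * (t - s) powr \<alpha> * norm (x s - y s)"
      unfolding W_def germ_def using Lip[of s t "x s" "y s"] st ab by simp
    also have "\<dots> \<le> K * (t - s) powr \<alpha> * (Z * h powr \<alpha>)"
      using zq[of s] st ab K by (intro mult_left_mono) auto
    finally show ?thesis .
  qed
  have ts: "(t - s) powr th \<le> (t - s) powr \<alpha> * h powr (\<alpha> * \<beta>)"
  proof -
    have "(t - s) powr th = (t - s) powr \<alpha> * (t - s) powr (\<alpha> * \<beta>)" unfolding th_def by (simp add: powr_add)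
    also have "\<dots> \<le> (t - s) powr \<alpha> * h powr (\<alpha> * \<beta>)"
      using st ab al be by (intro mult_left_mono powr_mono2) auto
    finally show ?thesis .
  qed
  have "norm ((u t - v t) - (u s - v s)) \<le> norm (W s t) + norm (I - W s t)"
  proof -
    have "(u t - v t) - (u s - v s) = W s t + (I - W s t)" using II by (simp add: algebra_simps)
    then show ?thesis using norm_triangle_ineq[of "W s t" "I - W s t"] by simp
  qed
  also have "\<dots> \<le> K * (t - s) powr \<alpha> * (Z * h powr \<alpha>) + sM th * C' * ((t - s) powr \<alpha> * h powr (\<alpha> * \<beta>))"
    using Wb I(2) ts sM_props[OF th1] C' by (smt (verit) mult_left_mono mult_nonneg_nonneg)
  also have "\<dots> = Z * qf h R * (t - s) powr \<alpha>"
  proof -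
    have e1: "h powr \<alpha> = h powr (\<alpha> - \<alpha> * \<beta>) * h powr (\<alpha> * \<beta>)" by (simp add: powr_add[symmetric])
    have e2: "h powr (\<alpha> + \<alpha> * \<beta>) = h powr (\<alpha> - \<alpha> * \<beta>) * h powr (\<alpha> * \<beta>) * h powr (\<alpha> * \<beta>)"
      by (simp add: powr_add[symmetric])
    show ?thesis unfolding qf_def C'_def th_def e2 e1 by algebra
  qed
  finally show "norm ((u t - v t) - (u s - v s)) \<le> Z * qf h R * (t - s) powr \<alpha>" .
qed

end


lemma hold_mono: "hold e R a b x \<Longrightarrow> R \<le> R' \<Longrightarrow> hold e R' a b x"
  unfolding hold_def by (meson mult_right_mono order_trans powr_ge_zero)

lemma yconv_triv:
  assumes "yconv X a a I" shows "I = 0"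
proof -
  have *: "norm I < e" if e: "e > 0" for e
  proof -
    obtain d where "d > 0" "\<forall>F. ppart a a F \<and> pfine d F \<longrightarrow> norm (psum X F - I) < e"
      using assms e unfolding yconv_def by blast
    moreover have "ppart a a {a}" "pfine d {a}" unfolding ppart_def pfine_def by auto
    ultimately have "norm (psum X {a} - I) < e" by blast
    then show ?thesis by (simp add: psum_single)
  qed
  show ?thesis
  proof (rule ccontr)
    assume "I \<noteq> 0"
    then have "norm I > 0" by simp
    then have "norm I < norm I" using * by blast
    then show False by simp
  qed
qed

context yde
begin

definition Ilim :: "(real \<Rightarrow> 'v) \<Rightarrow> real \<Rightarrow> real \<Rightarrow> 'v" where
  "Ilim x s t = (SOME I. yconv (germ A x) s t I)"

definition Phi :: "real \<Rightarrow> 'v \<Rightarrow> (real \<Rightarrow> 'v) \<Rightarrow> real \<Rightarrow> 'v" where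
  "Phi a \<xi> x = (\<lambda>t. \<xi> + Ilim x a t)"

lemma two_al: "\<alpha> + \<alpha> > 1"
proof -
  have "\<alpha> * (1 + \<beta>) < \<alpha> * 2" using al be by (intro mult_strict_left_mono) auto
  then show ?thesis using ab by simp
qed

lemma Pstep:
  assumes ab: "0 \<le> a" "a \<le> b" "b \<le> T" "b - a \<le> h" and R0: "R0 = 2 * K"
    and hD: "sM (\<alpha> + \<alpha>) * (K * R0) * h powr \<alpha> \<le> K"
    and H: "hold \<alpha> R0 a b x"
  shows "\<And>s t. a \<le> s \<Longrightarrow> s \<le> t \<Longrightarrow> t \<le> b \<Longrightarrow> yconv (germ A x) s t (Phi a \<xi> x t - Phi a \<xi> x s)"
    "Phi a \<xi> x a = \<xi>"
    "\<And>s t. a \<le> s \<Longrightarrow> s \<le> t \<Longrightarrow> t \<le> b \<Longrightarrow>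
       norm (Phi a \<xi> x t - Phi a \<xi> x s - germ A x s t) \<le> sM (\<alpha> + \<alpha>) * (K * R0) * (t - s) powr (\<alpha> + \<alpha>)"
    "hold \<alpha> R0 a b (Phi a \<xi> x)"
proof -
  have R00: "R0 \<ge> 0" using R0 K by simp
  have yI: "yconv (germ A x) a t (Ilim x a t)" if "a \<le> t" "t \<le> b" for t
  proof -
    have "\<exists>I. yconv (germ A x) a t I"
      using germ_sewing[OF H ab(1) ab(3) R00 _ two_al, of a t] that al by auto
    then show ?thesis unfolding Ilim_def by (rule someI_ex)
  qed
  show Y: "yconv (germ A x) s t (Phi a \<xi> x t - Phi a \<xi> x s)" if "a \<le> s" "s \<le> t" "t \<le> b" for s t
  proof -
    have "yconv (germ A x) s t (Ilim x a t - Ilim x a s)"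
      by (rule yconv_sub[OF that(1,2)]) (use yI that in auto)
    then show ?thesis unfolding Phi_def by simp
  qed
  show "Phi a \<xi> x a = \<xi>" unfolding Phi_def using yconv_triv[OF yI[of a]] ab by simp
  have HP: "hold \<alpha> R0 a b (Phi a \<xi> x)" if "hold \<alpha> R0 a b (Phi a \<xi> x)" using that .
  show D: "norm (Phi a \<xi> x t - Phi a \<xi> x s - germ A x s t) \<le> sM (\<alpha> + \<alpha>) * (K * R0) * (t - s) powr (\<alpha> + \<alpha>)"
    if st: "a \<le> s" "s \<le> t" "t \<le> b" for s t
  proof -
    obtain I where I: "yconv (germ A x) s t I" "norm (I - germ A x s t) \<le> sM (\<alpha> + \<alpha>) * (K * R0) * (t - s) powr (\<alpha> + \<alpha>)"
      using germ_sewing[OF H ab(1) ab(3) R00 _ two_al st] al by auto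
    have "I = Phi a \<xi> x t - Phi a \<xi> x s" using yconv_unique[OF st(2) I(1) Y[OF st]] .
    then show ?thesis using I(2) by simp
  qed
  show "hold \<alpha> R0 a b (Phi a \<xi> x)"
    unfolding hold_def
  proof (intro allI impI)
    fix s t assume st: "a \<le> s" "s \<le> t" "t \<le> b"
    have "norm (Phi a \<xi> x t - Phi a \<xi> x s) \<le> norm (germ A x s t) + norm (Phi a \<xi> x t - Phi a \<xi> x s - germ A x s t)"
      by (metis add.commute diff_add_cancel norm_triangle_ineq)
    also have "\<dots> \<le> K * (t - s) powr \<alpha> + sM (\<alpha> + \<alpha>) * (K * R0) * ((t - s) powr \<alpha> * h powr \<alpha>)"
    proof (intro add_mono)
      show "norm (germ A x s t) \<le> K * (t - s) powr \<alpha>" using germ_bound st ab by auto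
      have "norm (Phi a \<xi> x t - Phi a \<xi> x s - germ A x s t) \<le> sM (\<alpha> + \<alpha>) * (K * R0) * (t - s) powr (\<alpha> + \<alpha>)"
        using D st by auto
      also have "\<dots> = sM (\<alpha> + \<alpha>) * (K * R0) * ((t - s) powr \<alpha> * (t - s) powr \<alpha>)" by (simp only: powr_add)
      also have "\<dots> \<le> sM (\<alpha> + \<alpha>) * (K * R0) * ((t - s) powr \<alpha> * h powr \<alpha>)"
        using st ab al sM_props[OF two_al] K R00 by (intro mult_left_mono powr_mono2) auto
      finally show "norm (Phi a \<xi> x t - Phi a \<xi> x s - germ A x s t) \<le> sM (\<alpha> + \<alpha>) * (K * R0) * ((t - s) powr \<alpha> * h powr \<alpha>)" .
    qed
    also have "\<dots> = (K + sM (\<alpha> + \<alpha>) * (K * R0) * h powr \<alpha>) * (t - s) powr \<alpha>" by (simp add: algebra_simps)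
    also have "\<dots> \<le> R0 * (t - s) powr \<alpha>" using hD R0 by (intro mult_right_mono) auto
    finally show "norm (Phi a \<xi> x t - Phi a \<xi> x s) \<le> R0 * (t - s) powr \<alpha>" .
  qed
qed

lemma local_exist:
  assumes ab: "0 \<le> a" "a \<le> b" "b \<le> T" "b - a \<le> h" and R0: "R0 = 2 * K"
    and hD: "sM (\<alpha> + \<alpha>) * (K * R0) * h powr \<alpha> \<le> K" and hq: "qf h R0 \<le> 1/2" and h0: "h \<ge> 0"
  shows "\<exists>X. X a = \<xi> \<and> (\<forall>s t. a \<le> s \<longrightarrow> s \<le> t \<longrightarrow> t \<le> b \<longrightarrow>
     norm (X t - X s - germ A X s t) \<le> sM (\<alpha> + \<alpha>) * (K * R0) * (t - s) powr (\<alpha> + \<alpha>))"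
proof -
  have R00: "R0 \<ge> 0" using R0 K by simp
  define xs where "xs k = (Phi a \<xi> ^^ k) (\<lambda>t. \<xi>)" for k
  have xsS: "xs (Suc k) = Phi a \<xi> (xs k)" for k unfolding xs_def by simp
  have inv: "hold \<alpha> R0 a b (xs k) \<and> xs k a = \<xi>" for k
  proof (induction k)
    case 0
    then show ?case unfolding xs_def hold_def using R00 by simp
  next
    case (Suc k)
    then show ?case unfolding xsS using Pstep[OF ab R0 hD] by auto
  qed
  have diff: "hold \<alpha> (R0 / 2 ^ k) a b (\<lambda>t. xs (Suc k) t - xs k t)" for k
  proof (induction k)
    case 0
    have "hold \<alpha> R0 a b (xs (Suc 0))" using inv by blast
    then show ?case unfolding hold_def xs_def by simp
  next
    case (Suc k)
    have "hold \<alpha> (R0 / 2 ^ k * qf h R0) a b (\<lambda>t. xs (Suc (Suc k)) t - xs (Suc k) t)"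
      unfolding xsS[of "Suc k"]
    proof (rule contraction[OF ab R00 _ inv[THEN conjunct1] inv[THEN conjunct1] _ Suc.IH])
      show "0 \<le> R0 / 2 ^ k" using R00 by simp
      show "xs (Suc k) a = xs k a" using inv by simp
      show "yconv (germ A (xs (Suc k))) s t (Phi a \<xi> (xs (Suc k)) t - Phi a \<xi> (xs (Suc k)) s)"
        if "a \<le> s" "s \<le> t" "t \<le> b" for s t
        using Pstep(1)[OF ab R0 hD inv[THEN conjunct1] that] .
      show "yconv (germ A (xs k)) s t (xs (Suc k) t - xs (Suc k) s)"
        if "a \<le> s" "s \<le> t" "t \<le> b" for s t
        unfolding xsS using Pstep(1)[OF ab R0 hD inv[THEN conjunct1] that] .
    qed
    moreover have "R0 / 2 ^ k * qf h R0 \<le> R0 / 2 ^ Suc k"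
    proof -
      have "R0 / 2 ^ k * qf h R0 \<le> R0 / 2 ^ k * (1/2)" by (intro mult_left_mono hq) (use R00 in simp)
      also have "\<dots> = R0 / 2 ^ Suc k" by simp
      finally show ?thesis .
    qed
    ultimately show ?case by (rule hold_mono)
  qed
  have pw: "norm (xs (Suc k) t - xs k t) \<le> R0 * h powr \<alpha> * (1/2) ^ k" if t: "a \<le> t" "t \<le> b" for k t
  proof -
    have "norm ((xs (Suc k) t - xs k t) - (xs (Suc k) a - xs k a)) \<le> R0 / 2 ^ k * (t - a) powr \<alpha>"
      using holdD[OF diff[of k], of a t] t by simp
    moreover have "xs (Suc k) a - xs k a = 0" using inv by simp
    moreover have "R0 / 2 ^ k * (t - a) powr \<alpha> \<le> R0 / 2 ^ k * h powr \<alpha>"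
      using t ab R00 al by (intro mult_left_mono powr_mono2) auto
    ultimately show ?thesis by (simp add: power_one_over field_simps)
  qed
  define X where "X t = \<xi> + (\<Sum>k. xs (Suc k) t - xs k t)" for t
  have conv: "(\<lambda>k. xs k t) \<longlonglongrightarrow> X t" if t: "a \<le> t" "t \<le> b" for t
  proof -
    have "summable (\<lambda>k. xs (Suc k) t - xs k t)"
    proof (rule summable_comparison_test')
      show "summable (\<lambda>k. R0 * h powr \<alpha> * (1/2) ^ k)" by (intro summable_mult summable_geometric) auto
      show "norm (xs (Suc k) t - xs k t) \<le> R0 * h powr \<alpha> * (1/2) ^ k" for k using pw t by auto
    qed
    then have "(\<lambda>n. \<Sum>k<n. xs (Suc k) t - xs k t) \<longlonglongrightarrow> (\<Sum>k. xs (Suc k) t - xs k t)"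
      by (rule summable_LIMSEQ)
    then have "(\<lambda>n. \<xi> + (\<Sum>k<n. xs (Suc k) t - xs k t)) \<longlonglongrightarrow> X t"
      unfolding X_def by (intro tendsto_add tendsto_const)
    moreover have "\<xi> + (\<Sum>k<n. xs (Suc k) t - xs k t) = xs n t" for n
    proof -
      have "(\<Sum>k<n. xs (Suc k) t - xs k t) = xs n t - xs 0 t" by (rule sum_lessThan_telescope)
      moreover have "xs 0 t = \<xi>" by (simp add: xs_def)
      ultimately show ?thesis by simp
    qed
    ultimately show ?thesis by simp
  qed
  have Xa: "X a = \<xi>"
  proof -
    have c: "(\<lambda>k. xs k a) \<longlonglongrightarrow> X a" using conv ab by auto
    have "(\<lambda>k. xs k a) = (\<lambda>k. \<xi>)" using inv by auto
    then have "(\<lambda>k. \<xi>) \<longlonglongrightarrow> X a" using c by simp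
    from LIMSEQ_unique[OF this tendsto_const] show ?thesis by simp
  qed
  have dav: "norm (X t - X s - germ A X s t) \<le> sM (\<alpha> + \<alpha>) * (K * R0) * (t - s) powr (\<alpha> + \<alpha>)"
    if st: "a \<le> s" "s \<le> t" "t \<le> b" for s t
  proof -
    have cs: "(\<lambda>k. xs k s) \<longlonglongrightarrow> X s" and ct: "(\<lambda>k. xs k t) \<longlonglongrightarrow> X t" using conv st by auto
    have cA: "isCont (A r) (X s)" if "0 \<le> r" "r \<le> T" for r
      using has_derivative_continuous[OF Ad[OF that]] .
    have c1: "(\<lambda>k. xs (Suc k) t) \<longlonglongrightarrow> X t" using LIMSEQ_Suc[OF ct] .
    have c2: "(\<lambda>k. xs (Suc k) s) \<longlonglongrightarrow> X s" using LIMSEQ_Suc[OF cs] .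
    have c3: "(\<lambda>k. A t (xs k s)) \<longlonglongrightarrow> A t (X s)" by (rule isCont_tendsto_compose[OF cA cs]) (use st ab in auto)
    have c4: "(\<lambda>k. A s (xs k s)) \<longlonglongrightarrow> A s (X s)" by (rule isCont_tendsto_compose[OF cA cs]) (use st ab in auto)
    have "(\<lambda>k. xs (Suc k) t - xs (Suc k) s - (A t (xs k s) - A s (xs k s))) \<longlonglongrightarrow> X t - X s - (A t (X s) - A s (X s))"
      by (intro tendsto_diff c1 c2 c3 c4)
    then have "(\<lambda>k. xs (Suc k) t - xs (Suc k) s - germ A (xs k) s t) \<longlonglongrightarrow> X t - X s - germ A X s t"
      unfolding germ_def .
    then have lim: "(\<lambda>k. norm (xs (Suc k) t - xs (Suc k) s - germ A (xs k) s t)) \<longlonglongrightarrow> norm (X t - X s - germ A X s t)"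
      by (rule tendsto_norm)
    have bd: "norm (xs (Suc k) t - xs (Suc k) s - germ A (xs k) s t) \<le> sM (\<alpha> + \<alpha>) * (K * R0) * (t - s) powr (\<alpha> + \<alpha>)" for k
      unfolding xsS using Pstep(3)[OF ab R0 hD inv[THEN conjunct1] st] .
    show ?thesis using lim by (rule LIMSEQ_le_const2) (use bd in auto)
  qed
  show ?thesis using Xa dav by blast
qed

end


lemma hold_sub: "hold e R a b x \<Longrightarrow> a \<le> a' \<Longrightarrow> b' \<le> b \<Longrightarrow> hold e R a' b' x"
  unfolding hold_def by auto

context yde
begin

definition davie :: "real \<Rightarrow> real \<Rightarrow> real \<Rightarrow> (real \<Rightarrow> 'v) \<Rightarrow> bool" where
  "davie D a b x \<longleftrightarrow> (\<forall>s t. a \<le> s \<longrightarrow> s \<le> t \<longrightarrow> t \<le> b \<longrightarrow>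
      norm (x t - x s - germ A x s t) \<le> D * (t - s) powr (\<alpha> + \<alpha>))"

lemma exists_h:
  assumes R: "R \<ge> 0"
  shows "\<exists>h>0. h \<le> 1 \<and> qf h R \<le> 1/2 \<and> sM (\<alpha> + \<alpha>) * (K * R) * h powr \<alpha> \<le> K"
proof -
  have th1: "\<alpha> + \<alpha> * \<beta> > 1" using ab by (simp add: algebra_simps)
  have s1: "sM (\<alpha> + \<alpha> * \<beta>) > 0" using sM_props[OF th1] by simp
  have s2: "sM (\<alpha> + \<alpha>) > 0" using sM_props[OF two_al] by simp
  define c where "c = K + sM (\<alpha> + \<alpha> * \<beta>) * K * (1 + R powr \<beta>) + sM (\<alpha> + \<alpha>) * (K * R)"
  have c0: "c \<ge> 0" unfolding c_def using K s1 s2 R by simp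
  obtain d where d: "d > 0" "\<And>d'. 0 \<le> d' \<Longrightarrow> d' \<le> d \<Longrightarrow> c * d' powr \<alpha> < min (1/2) K"
    using small_pow[OF al(1) c0, of "min (1/2) K"] K by auto
  define h where "h = min d 1"
  have h: "h > 0" "h \<le> 1" "h \<le> d" unfolding h_def using d by auto
  have ch: "c * h powr \<alpha> < min (1/2) K" using d(2)[of h] h by auto
  have hth: "h powr (\<alpha> + \<alpha> * \<beta>) \<le> h powr \<alpha>"
    using h al be by (intro powr_mono') auto
  have "qf h R \<le> K * h powr \<alpha> + sM (\<alpha> + \<alpha> * \<beta>) * K * (h powr \<alpha> + R powr \<beta> * h powr \<alpha>)"
    unfolding qf_def using hth s1 K R by (intro add_mono mult_left_mono order_refl) auto
  also have "\<dots> \<le> c * h powr \<alpha>" unfolding c_def using s2 K R by (simp add: algebra_simps)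
  finally have q: "qf h R \<le> 1/2" using ch by simp
  have "sM (\<alpha> + \<alpha>) * (K * R) * h powr \<alpha> \<le> c * h powr \<alpha>"
    unfolding c_def using s1 K R by (intro mult_right_mono) auto
  then have "sM (\<alpha> + \<alpha>) * (K * R) * h powr \<alpha> \<le> K" using ch by simp
  then show ?thesis using h q by blast
qed

lemma davie_yconv:
  assumes dv: "davie D a b x" and D: "D \<ge> 0" and st: "a \<le> s" "s \<le> t" "t \<le> b"
  shows "yconv (germ A x) s t (x t - x s)"
  unfolding yconv_def
proof (intro allI impI)
  fix e :: real assume e: "e > 0"
  have q: "\<alpha> + \<alpha> - 1 > 0" using two_al by simp
  have c: "D * (t - s) \<ge> 0" using D st by simp
  obtain d where d: "d > 0" "\<And>d'. 0 \<le> d' \<Longrightarrow> d' \<le> d \<Longrightarrow> (D * (t - s)) * d' powr (\<alpha> + \<alpha> - 1) < e"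
    using small_pow[OF q c e] by auto
  show "\<exists>d>0. \<forall>F. ppart s t F \<and> pfine d F \<longrightarrow> norm (psum (germ A x) F - (x t - x s)) < e"
  proof (intro exI[of _ d] conjI allI impI)
    fix F assume F: "ppart s t F \<and> pfine d F"
    have Fs: "F \<subseteq> {s..t}" using F unfolding ppart_def by auto
    have tel: "psum (\<lambda>p r. x r - x p) F = x t - x s" by (rule psum_telescope[OF F[THEN conjunct1]])
    have "psum (germ A x) F - (x t - x s) = psum (\<lambda>p r. germ A x p r - (x r - x p)) F"
      by (simp only: psum_diff[of "germ A x" "\<lambda>p r. x r - x p" F] tel)
    then have "norm (psum (germ A x) F - (x t - x s)) \<le> psum (\<lambda>p r. norm (germ A x p r - (x r - x p))) F"
      using psum_norm by metis
    also have "\<dots> \<le> D * d powr (\<alpha> + \<alpha> - 1) * (t - s)"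
    proof (rule psum_fine_bound[OF F[THEN conjunct1] F[THEN conjunct2] two_al D])
      fix p r assume pr: "p \<in> F" "r \<in> F" "p < r" "r - p \<le> d"
      have "norm (germ A x p r - (x r - x p)) = norm (x r - x p - germ A x p r)"
        by (simp add: norm_minus_commute)
      also have "\<dots> \<le> D * (r - p) powr (\<alpha> + \<alpha>)"
      proof -
        have "a \<le> p" "r \<le> b" using pr Fs st by auto
        then show ?thesis using dv[unfolded davie_def, rule_format, of p r] pr by simp
      qed
      finally show "norm (germ A x p r - (x r - x p)) \<le> D * (r - p) powr (\<alpha> + \<alpha>)" .
    qed
    also have "\<dots> < e" using d(2)[of d] d(1) by (simp add: algebra_simps)
    finally show "norm (psum (germ A x) F - (x t - x s)) < e" .
  qed (use d in auto)
qed

lemma global_exist: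
  fixes x0 :: 'v
  shows "\<exists>x D. D \<ge> 0 \<and> x 0 = x0 \<and> davie D 0 T x"
proof -
  define R0 where "R0 = 2 * K"
  have R00: "R0 \<ge> 0" using K unfolding R0_def by simp
  obtain h where h: "h > 0" "h \<le> 1" "qf h R0 \<le> 1/2" "sM (\<alpha> + \<alpha>) * (K * R0) * h powr \<alpha> \<le> K"
    using exists_h[OF R00] by blast
  define Ds where "Ds = sM (\<alpha> + \<alpha>) * (K * R0)"
  have Ds: "Ds \<ge> 0" unfolding Ds_def using sM_props[OF two_al] K R00 by simp
  have G: "\<exists>x D. D \<ge> 0 \<and> x 0 = x0 \<and> davie D 0 (min (real n * h) T) x" for n
  proof (induction n)
    case 0
    have m0: "min (real 0 * h) T = 0" using T by simp
    have "davie 0 0 0 (\<lambda>t. x0)"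
      unfolding davie_def germ_def
    proof (intro allI impI)
      fix s t :: real assume st: "0 \<le> s" "s \<le> t" "t \<le> 0"
      then have "s = t" by linarith
      then show "norm (x0 - x0 - (A t x0 - A s x0)) \<le> 0 * (t - s) powr (\<alpha> + \<alpha>)" by simp
    qed
    then have "0 \<le> (0::real) \<and> (\<lambda>t. x0) 0 = x0 \<and> davie 0 0 (min (real 0 * h) T) (\<lambda>t. x0)"
      unfolding m0 by simp
    then show ?case by (intro exI)
  next
    case (Suc n)
    then obtain x D where xD: "D \<ge> 0" "x 0 = x0" "davie D 0 (min (real n * h) T) x" by blast
    define a where "a = min (real n * h) T"
    define b where "b = min (real (Suc n) * h) T"
    have a0: "0 \<le> a" "a \<le> T" unfolding a_def using h T by auto
    have ab': "a \<le> b" "b \<le> T" "b - a \<le> h" unfolding a_def b_def using h T by (auto simp: algebra_simps)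
    show ?case
    proof (cases "a = T")
      case True
      then have "b = a" using ab' by simp
      then have "davie D 0 b x" using xD(3) unfolding a_def[symmetric] by simp
      then show ?thesis unfolding b_def[symmetric] using xD(1,2) by blast
    next
      case False
      obtain y where y: "y a = x a" "\<And>s t. a \<le> s \<Longrightarrow> s \<le> t \<Longrightarrow> t \<le> b \<Longrightarrow>
          norm (y t - y s - germ A y s t) \<le> Ds * (t - s) powr (\<alpha> + \<alpha>)"
        using local_exist[OF a0(1) ab'(1,2,3) R0_def h(4) h(3) less_imp_le[OF h(1)], of "x a"]
        unfolding Ds_def by blast
      define L where "L = K + D * a powr \<alpha>"
      have L0: "L \<ge> 0" unfolding L_def using K xD by simp
      have hx: "hold \<alpha> L 0 a x" unfolding L_def
        using hold_from_davie[OF order_refl a0(1) a0(2) xD(1) less_imp_le[OF al(1)], of x] xD(3)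
        unfolding davie_def a_def by simp
      define x' where "x' t = (if t \<le> a then x t else y t)" for t
      have x'y: "x' t = y t" if "a \<le> t" for t using y(1) that unfolding x'_def by auto
      have "davie (D + Ds + K * L) 0 b x'"
        unfolding davie_def
      proof (intro allI impI)
        fix s t assume st: "0 \<le> s" "s \<le> t" "t \<le> b"
        have pw: "(t - s) powr (\<alpha> + \<alpha>) \<ge> 0" by simp
        show "norm (x' t - x' s - germ A x' s t) \<le> (D + Ds + K * L) * (t - s) powr (\<alpha> + \<alpha>)"
        proof (cases "t \<le> a")
          case True
          then have "norm (x' t - x' s - germ A x' s t) \<le> D * (t - s) powr (\<alpha> + \<alpha>)"
            using xD(3) st unfolding davie_def a_def[symmetric] x'_def germ_def by auto
          also have "\<dots> \<le> (D + Ds + K * L) * (t - s) powr (\<alpha> + \<alpha>)"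
            using Ds K L0 by (intro mult_right_mono) auto
          finally show ?thesis .
        next
          case ta: False
          show ?thesis
          proof (cases "a \<le> s")
            case True
            have "norm (x' t - x' s - germ A x' s t) \<le> Ds * (t - s) powr (\<alpha> + \<alpha>)"
              using y(2)[OF True st(2,3)] x'y[OF True] x'y[of t] True st unfolding germ_def by auto
            also have "\<dots> \<le> (D + Ds + K * L) * (t - s) powr (\<alpha> + \<alpha>)"
              using xD K L0 by (intro mult_right_mono) auto
            finally show ?thesis .
          next
            case sa: False
            have e1: "x' t - x' s - germ A x' s t = (y t - y a - germ A y a t) + (x a - x s - germ A x s a)
              + ((A t (x a) - A a (x a)) - (A t (x s) - A a (x s)))"
              using sa ta y(1) unfolding x'_def germ_def by (simp add: algebra_simps)
            have n1: "norm (y t - y a - germ A y a t) \<le> Ds * (t - s) powr (\<alpha> + \<alpha>)"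
            proof -
              have "norm (y t - y a - germ A y a t) \<le> Ds * (t - a) powr (\<alpha> + \<alpha>)" using y(2)[of a t] ta st(3) by simp
              also have "\<dots> \<le> Ds * (t - s) powr (\<alpha> + \<alpha>)" using Ds sa ta al by (intro mult_left_mono powr_mono2) auto
              finally show ?thesis .
            qed
            have n2: "norm (x a - x s - germ A x s a) \<le> D * (t - s) powr (\<alpha> + \<alpha>)"
            proof -
              have "norm (x a - x s - germ A x s a) \<le> D * (a - s) powr (\<alpha> + \<alpha>)"
                using xD(3) st sa unfolding davie_def a_def[symmetric] by auto
              also have "\<dots> \<le> D * (t - s) powr (\<alpha> + \<alpha>)" using xD(1) sa ta al by (intro mult_left_mono powr_mono2) auto
              finally show ?thesis .
            qed
            have n3: "norm ((A t (x a) - A a (x a)) - (A t (x s) - A a (x s))) \<le> K * L * (t - s) powr (\<alpha> + \<alpha>)"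
            proof -
              have "norm ((A t (x a) - A a (x a)) - (A t (x s) - A a (x s))) \<le> K * (t - a) powr \<alpha> * norm (x a - x s)"
                using Lip[of a t "x a" "x s"] a0 ta st ab'(2) by simp
              also have "\<dots> \<le> K * (t - s) powr \<alpha> * (L * (t - s) powr \<alpha>)"
              proof (rule mult_mono)
                show "K * (t - a) powr \<alpha> \<le> K * (t - s) powr \<alpha>" using K sa ta al by (intro mult_left_mono powr_mono2) auto
                have "norm (x a - x s) \<le> L * (a - s) powr \<alpha>" using holdD[OF hx, of s a] st sa by simp
                also have "\<dots> \<le> L * (t - s) powr \<alpha>" using L0 sa ta al by (intro mult_left_mono powr_mono2) auto
                finally show "norm (x a - x s) \<le> L * (t - s) powr \<alpha>" .
              qed (use K in auto)
              also have "\<dots> = K * L * (t - s) powr (\<alpha> + \<alpha>)"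
                unfolding powr_add[of "t - s" \<alpha> \<alpha>] by (simp only: algebra_simps)
              finally show ?thesis .
            qed
            have "norm (x' t - x' s - germ A x' s t) \<le> norm (y t - y a - germ A y a t) + norm (x a - x s - germ A x s a)
              + norm ((A t (x a) - A a (x a)) - (A t (x s) - A a (x s)))"
              unfolding e1 by (rule order_trans[OF norm_triangle_ineq add_mono[OF norm_triangle_ineq order_refl]])
            also have "\<dots> \<le> (D + Ds + K * L) * (t - s) powr (\<alpha> + \<alpha>)" using n1 n2 n3 by (simp add: algebra_simps)
            finally show ?thesis .
          qed
        qed
      qed
      moreover have "x' 0 = x0" using xD(2) a0 unfolding x'_def by simp
      moreover have "D + Ds + K * L \<ge> 0" using xD Ds K L0 by simp
      ultimately show ?thesis unfolding b_def by blast
    qed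
  qed
  obtain n where n: "T / h < real n" using reals_Archimedean2 by blast
  have "min (real n * h) T = T" using n h by (simp add: field_simps)
  then show ?thesis using G[of n] by simp
qed

end


context yde
begin

lemma sol_props:
  assumes S: "YDE_solution T \<alpha> \<beta> A x0 y"
  shows "y 0 = x0" "\<And>s t. 0 \<le> s \<Longrightarrow> s \<le> t \<Longrightarrow> t \<le> T \<Longrightarrow> yconv (germ A y) s t (y t - y s)"
    "\<exists>R\<ge>0. hold \<alpha> R 0 T y"
proof -
  obtain \<gamma> where g: "\<alpha> + \<beta> * \<gamma> > 1" "holder_path T \<gamma> y"
    and HY: "\<And>t. t \<in> {0..T} \<Longrightarrow> has_young_integral A y 0 t (y t - x0)"
    using S unfolding YDE_solution_def by blast
  have Y0: "yconv (germ A y) 0 t (y t - x0)" if "0 \<le> t" "t \<le> T" for t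
    using hy_to_yconv[OF HY] that by auto
  show y0: "y 0 = x0" using yconv_triv[OF Y0[of 0]] T by simp
  show Y: "yconv (germ A y) s t (y t - y s)" if st: "0 \<le> s" "s \<le> t" "t \<le> T" for s t
    using yconv_sub[OF st(1,2) Y0[of t] Y0[of s]] st by simp
  have g0: "\<gamma> > 0"
  proof (rule ccontr)
    assume "\<not> \<gamma> > 0"
    then have "\<beta> * \<gamma> \<le> 0" using be by (simp add: mult_nonneg_nonpos)
    then show False using g(1) al by simp
  qed
  have ag: "\<alpha> + \<gamma> > 1"
  proof -
    have "\<beta> * \<gamma> \<le> 1 * \<gamma>" using be g0 by (intro mult_right_mono) auto
    then show ?thesis using g(1) by simp
  qed
  obtain Kh where Kh: "\<And>s t. s \<in> {0..T} \<Longrightarrow> t \<in> {0..T} \<Longrightarrow> s < t \<Longrightarrow> norm (y t - y s) \<le> Kh * (t - s) powr \<gamma>"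
    using g(2) unfolding holder_path_def by blast
  define Kg where "Kg = max Kh 0"
  have Kg: "Kg \<ge> 0" unfolding Kg_def by simp
  have hg: "hold \<gamma> Kg 0 T y" unfolding hold_def
  proof (intro allI impI)
    fix s t assume st: "0 \<le> s" "s \<le> t" "t \<le> T"
    show "norm (y t - y s) \<le> Kg * (t - s) powr \<gamma>"
    proof (cases "s = t")
      case False
      then have "norm (y t - y s) \<le> Kh * (t - s) powr \<gamma>" using Kh st by auto
      also have "\<dots> \<le> Kg * (t - s) powr \<gamma>" unfolding Kg_def by (intro mult_right_mono) auto
      finally show ?thesis .
    qed simp
  qed
  define D where "D = sM (\<alpha> + \<gamma>) * (K * Kg)"
  have D: "D \<ge> 0" unfolding D_def using sM_props[OF ag] K Kg by simp
  have "hold \<alpha> (K + D * (T - 0) powr \<gamma>) 0 T y"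
  proof (rule hold_from_davie[OF order_refl less_imp_le[OF T] order_refl D less_imp_le[OF g0]])
    fix s t assume st: "0 \<le> s" "s \<le> t" "t \<le> T"
    show "norm (y t - y s - germ A y s t) \<le> D * (t - s) powr (\<alpha> + \<gamma>)"
      unfolding D_def by (rule davie_from_yconv[OF hg order_refl order_refl Kg less_imp_le[OF g0] ag st Y[OF st]])
  qed
  moreover have "K + D * (T - 0) powr \<gamma> \<ge> 0" using K D by simp
  ultimately show "\<exists>R\<ge>0. hold \<alpha> R 0 T y" by blast
qed

lemma uniqueness:
  assumes Sx: "YDE_solution T \<alpha> \<beta> A x0 x" and Sy: "YDE_solution T \<alpha> \<beta> A x0 y"
  shows "\<forall>t\<in>{0..T}. y t = x t"
proof -
  obtain Rx where Rx: "Rx \<ge> 0" "hold \<alpha> Rx 0 T x" using sol_props(3)[OF Sx] by blast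
  obtain Ry where Ry: "Ry \<ge> 0" "hold \<alpha> Ry 0 T y" using sol_props(3)[OF Sy] by blast
  define R where "R = max Rx Ry"
  have R: "R \<ge> 0" unfolding R_def using Rx by simp
  have hx: "hold \<alpha> R 0 T x" using hold_mono[OF Rx(2)] unfolding R_def by simp
  have hy: "hold \<alpha> R 0 T y" using hold_mono[OF Ry(2)] unfolding R_def by simp
  obtain h where h: "h > 0" "qf h R \<le> 1/2" using exists_h[OF R] by blast
  have G: "\<forall>t. 0 \<le> t \<longrightarrow> t \<le> min (real n * h) T \<longrightarrow> x t = y t" for n
  proof (induction n)
    case 0
    then show ?case using sol_props(1)[OF Sx] sol_props(1)[OF Sy] h T by auto
  next
    case (Suc n)
    define a where "a = min (real n * h) T"
    define b where "b = min (real (Suc n) * h) T"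
    have a0: "0 \<le> a" "a \<le> T" unfolding a_def using h T by auto
    have ab': "a \<le> b" "b \<le> T" "b - a \<le> h" unfolding a_def b_def using h T by (auto simp: algebra_simps)
    have xa: "x a = y a" using Suc.IH a0 unfolding a_def by auto
    have hxa: "hold \<alpha> R a b x" by (rule hold_sub[OF hx a0(1) ab'(2)])
    have hya: "hold \<alpha> R a b y" by (rule hold_sub[OF hy a0(1) ab'(2)])
    have Z: "hold \<alpha> (2 * R / 2 ^ k) a b (\<lambda>t. x t - y t)" for k
    proof (induction k)
      case 0
      show ?case unfolding hold_def
      proof (intro allI impI)
        fix s t assume st: "a \<le> s" "s \<le> t" "t \<le> b"
        have e: "(x t - y t) - (x s - y s) = (x t - x s) - (y t - y s)" by (simp add: algebra_simps)
        have "norm ((x t - y t) - (x s - y s)) \<le> norm (x t - x s) + norm (y t - y s)"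
          unfolding e by (rule norm_triangle_ineq4)
        also have "\<dots> \<le> R * (t - s) powr \<alpha> + R * (t - s) powr \<alpha>"
          using holdD[OF hxa st] holdD[OF hya st] by simp
        finally show "norm ((x t - y t) - (x s - y s)) \<le> 2 * R / 2 ^ 0 * (t - s) powr \<alpha>" by simp
      qed
    next
      case (Suc k)
      have "hold \<alpha> (2 * R / 2 ^ k * qf h R) a b (\<lambda>t. x t - y t)"
      proof (rule contraction[OF a0(1) ab'(1,2,3) R _ hxa hya xa Suc.IH])
        show "0 \<le> 2 * R / 2 ^ k" using R by simp
        show "yconv (germ A x) s t (x t - x s)" if "a \<le> s" "s \<le> t" "t \<le> b" for s t
          using sol_props(2)[OF Sx] that a0 ab' by auto
        show "yconv (germ A y) s t (y t - y s)" if "a \<le> s" "s \<le> t" "t \<le> b" for s t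
          using sol_props(2)[OF Sy] that a0 ab' by auto
      qed
      moreover have "2 * R / 2 ^ k * qf h R \<le> 2 * R / 2 ^ Suc k"
      proof -
        have "2 * R / 2 ^ k * qf h R \<le> 2 * R / 2 ^ k * (1/2)" by (intro mult_left_mono h(2)) (use R in simp)
        also have "\<dots> = 2 * R / 2 ^ Suc k" by simp
        finally show ?thesis .
      qed
      ultimately show ?case by (rule hold_mono)
    qed
    show ?case
    proof (intro allI impI)
      fix t assume t: "0 \<le> t" "t \<le> min (real (Suc n) * h) T"
      show "x t = y t"
      proof (cases "t \<le> a")
        case True then show ?thesis using Suc.IH t unfolding a_def by auto
      next
        case False
        then have ta: "a \<le> t" "t \<le> b" using t unfolding b_def by auto
        define c where "c = 2 * R * (t - a) powr \<alpha>"
        have c: "c \<ge> 0" unfolding c_def using R by simp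
        have bnd: "norm (x t - y t) \<le> c * (1/2) ^ k" for k
        proof -
          have "norm ((x t - y t) - (x a - y a)) \<le> 2 * R / 2 ^ k * (t - a) powr \<alpha>"
            using holdD[OF Z[of k] order_refl ta(1) ta(2)] .
          then show ?thesis using xa unfolding c_def by (simp add: power_one_over field_simps)
        qed
        have "(\<lambda>k. c * (1/2) ^ k) \<longlonglongrightarrow> 0"
          by (intro tendsto_mult_right_zero LIMSEQ_power_zero) simp
        then have "norm (x t - y t) \<le> 0"
          by (rule LIMSEQ_le_const) (use bnd in auto)
        then show ?thesis by simp
      qed
    qed
  qed
  obtain n where n: "T / h < real n" using reals_Archimedean2 by blast
  have "min (real n * h) T = T" using n h by (simp add: field_simps)
  then show ?thesis using G[of n] by auto
qed

end

theorem mainTheorem2: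
  fixes T \<alpha> \<beta> :: real and A :: "real \<Rightarrow> 'v::banach \<Rightarrow> 'v" and x0 :: 'v
  assumes "T > 0"
    and "separable_space TYPE('v)"
    and "0 < \<alpha>" "\<alpha> < 1" "0 < \<beta>" "\<beta> < 1" "\<alpha> * (1 + \<beta>) > 1"
    and "field_holder_1 T \<alpha> \<beta> A"
  shows "\<exists>x. YDE_solution T \<alpha> \<beta> A x0 x \<and>
           (\<forall>y. YDE_solution T \<alpha> \<beta> A x0 y \<longrightarrow> (\<forall>t\<in>{0..T}. y t = x t))"
proof -
  have FA: "field_holder T \<alpha> \<beta> A"
    using assms(8) unfolding field_holder_1_def by (rule conjunct1[OF conjunct2])
  have "\<exists>DA :: real \<Rightarrow> 'v \<Rightarrow> ('v \<Rightarrow>\<^sub>L 'v). (\<forall>t\<in>{0..T}. \<forall>x. (A t has_derivative blinfun_apply (DA t x)) (at x)) \<and>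
        field_holder T \<alpha> \<beta> DA"
    using assms(8) unfolding field_holder_1_def by (rule conjunct2[OF conjunct2])
  then obtain DA :: "real \<Rightarrow> 'v \<Rightarrow> ('v \<Rightarrow>\<^sub>L 'v)"
    where Ad: "\<forall>t\<in>{0..T}. \<forall>x. (A t has_derivative blinfun_apply (DA t x)) (at x)"
    and FD: "field_holder T \<alpha> \<beta> DA"
    by (elim exE conjE)
  obtain K1 where K1: "\<forall>s\<in>{0..T}. \<forall>t\<in>{0..T}. s < t \<longrightarrow>
      (\<forall>x y. x \<noteq> y \<longrightarrow> norm ((A t x - A s x) - (A t y - A s y)) \<le> K1 * (t - s) powr \<alpha> * norm (x - y) powr \<beta>) \<and>
      (\<forall>x. norm (A t x - A s x) \<le> K1 * (t - s) powr \<alpha>)"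
    using FA[unfolded field_holder_def] by (elim exE)
  obtain K2 where K2: "\<forall>s\<in>{0..T}. \<forall>t\<in>{0..T}. s < t \<longrightarrow>
      (\<forall>x y. x \<noteq> y \<longrightarrow> norm ((DA t x - DA s x) - (DA t y - DA s y)) \<le> K2 * (t - s) powr \<alpha> * norm (x - y) powr \<beta>) \<and>
      (\<forall>x. norm (DA t x - DA s x) \<le> K2 * (t - s) powr \<alpha>)"
    using FD[unfolded field_holder_def] by (elim exE)
  have K1b: "norm (A t x - A s x) \<le> K1 * (t - s) powr \<alpha>" if "0 \<le> s" "s < t" "t \<le> T" for s t x
  proof -
    have sT: "s \<in> {0..T}" and tT: "t \<in> {0..T}" using that by auto
    show ?thesis using conjunct2[OF K1[rule_format, OF sT tT that(2)]] by (rule spec)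
  qed
  have K2b: "norm (DA t x - DA s x) \<le> K2 * (t - s) powr \<alpha>" if "0 \<le> s" "s < t" "t \<le> T" for s t x
  proof -
    have sT: "s \<in> {0..T}" and tT: "t \<in> {0..T}" using that by auto
    show ?thesis using conjunct2[OF K2[rule_format, OF sT tT that(2)]] by (rule spec)
  qed
  have K2h: "norm ((DA t x - DA s x) - (DA t y - DA s y)) \<le> K2 * (t - s) powr \<alpha> * norm (x - y) powr \<beta>"
    if "0 \<le> s" "s < t" "t \<le> T" "x \<noteq> y" for s t x y
  proof -
    have sT: "s \<in> {0..T}" and tT: "t \<in> {0..T}" using that by auto
    show ?thesis using conjunct1[OF K2[rule_format, OF sT tT that(2)]] that(4) by blast
  qed
  define K where "K = max (max K1 K2) 1"
  have KK: "K1 \<le> K" "K2 \<le> K" "K > 0" unfolding K_def by auto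
  interpret Y: yde T \<alpha> \<beta> A DA K
  proof
    show "T > 0" "0 < \<alpha>" "\<alpha> < 1" "0 < \<beta>" "\<beta> < 1" "\<alpha> * (1 + \<beta>) > 1" "K > 0" using assms KK by auto
    show "norm (A t x - A s x) \<le> K * (t - s) powr \<alpha>" if "0 \<le> s" "s \<le> t" "t \<le> T" for s t x
    proof (cases "s = t")
      case False
      then have "norm (A t x - A s x) \<le> K1 * (t - s) powr \<alpha>" using K1b[of s t x] that by simp
      also have "\<dots> \<le> K * (t - s) powr \<alpha>" using KK by (intro mult_right_mono) auto
      finally show ?thesis .
    qed simp
    show "(A t has_derivative blinfun_apply (DA t x)) (at x)" if "0 \<le> t" "t \<le> T" for t x
      using Ad that by auto
    show "norm (DA t x - DA s x) \<le> K * (t - s) powr \<alpha>" if "0 \<le> s" "s \<le> t" "t \<le> T" for s t x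
    proof (cases "s = t")
      case False
      then have "norm (DA t x - DA s x) \<le> K2 * (t - s) powr \<alpha>" using K2b[of s t x] that by simp
      also have "\<dots> \<le> K * (t - s) powr \<alpha>" using KK by (intro mult_right_mono) auto
      finally show ?thesis .
    qed simp
    show "norm ((DA t x - DA s x) - (DA t y - DA s y)) \<le> K * (t - s) powr \<alpha> * norm (x - y) powr \<beta>"
      if "0 \<le> s" "s \<le> t" "t \<le> T" for s t x y
    proof (cases "s = t \<or> x = y")
      case False
      then have "norm ((DA t x - DA s x) - (DA t y - DA s y)) \<le> K2 * (t - s) powr \<alpha> * norm (x - y) powr \<beta>"
        using K2h[of s t x y] that by simp
      also have "\<dots> \<le> K * (t - s) powr \<alpha> * norm (x - y) powr \<beta>" using KK by (intro mult_right_mono) auto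
      finally show ?thesis .
    qed auto
  qed
  obtain x D where xD: "D \<ge> 0" "x 0 = x0" "Y.davie D 0 T x" using Y.global_exist[of x0] by blast
  define L where "L = K + D * (T - 0) powr \<alpha>"
  have L: "L \<ge> 0" unfolding L_def using KK xD by simp
  have hx: "hold \<alpha> L 0 T x" unfolding L_def
    by (rule Y.hold_from_davie[OF order_refl less_imp_le[OF assms(1)] order_refl xD(1) less_imp_le[OF assms(3)]])
      (use xD(3) in \<open>auto simp: Y.davie_def\<close>)
  have sol: "YDE_solution T \<alpha> \<beta> A x0 x"
    unfolding YDE_solution_def
  proof (intro conjI exI[of _ \<alpha>] ballI)
    show "\<alpha> + \<beta> * \<alpha> > 1" using assms(7) by (simp add: algebra_simps)
    define Kp where "Kp = norm x0 + L * T powr \<alpha> + L"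
    show "holder_path T \<alpha> x" unfolding holder_path_def
    proof (intro exI[of _ Kp] conjI ballI impI)
      fix t assume t: "t \<in> {0..T}"
      have "norm (x t) \<le> norm x0 + norm (x t - x 0)" using xD(2) norm_triangle_ineq[of x0 "x t - x0"] by simp
      also have "norm (x t - x 0) \<le> L * (t - 0) powr \<alpha>" using holdD[OF hx, of 0 t] t by auto
      also have "\<dots> \<le> L * T powr \<alpha>" using t L assms(3) by (intro mult_left_mono powr_mono2) auto
      finally show "norm (x t) \<le> Kp" unfolding Kp_def using L by simp
    next
      fix s t assume st: "s \<in> {0..T}" "t \<in> {0..T}" "s < t"
      have "norm (x t - x s) \<le> L * (t - s) powr \<alpha>" using holdD[OF hx, of s t] st by auto
      also have "\<dots> \<le> Kp * (t - s) powr \<alpha>" unfolding Kp_def using L by (intro mult_right_mono) auto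
      finally show "norm (x t - x s) \<le> Kp * (t - s) powr \<alpha>" .
    qed
  next
    fix t assume t: "t \<in> {0..T}"
    have "yconv (germ A x) 0 t (x t - x 0)" by (rule Y.davie_yconv[OF xD(3) xD(1)]) (use t in auto)
    then show "has_young_integral A x 0 t (x t - x0)" using xD(2) by (intro yconv_to_hy) simp
  qed
  show ?thesis using sol Y.uniqueness[OF sol] by blast
qed


end
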